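(* Let $\Gamma$ be a relational structure with domain $\mathbb{Q}.\mathbb{Z}$ whose relations are first-order definable in $(\mathbb{Q}.\mathbb{Z};\mathrm{suc})$ and which contains $\mathrm{suc}$ among its relations. The following are equivalent: (1) every reduced DNF formula defining a relation of $\Gamma$ over $(\mathbb{Q}.\mathbb{Z};\mathrm{suc})$ is positive; (2) $\Gamma$ has an endomorphism $e$ and elements $a,b$ lying in different copies of $\mathbb{Z}$ such that $e(a),e(b)$ lie in the same copy of $\mathbb{Z}$; (3) $\Gamma$ does not primitive positively define a non-trivial binary relation with infinite distance degree.
   Context: $\mathbb{Q}.\mathbb{Z}=\mathbb{Q}\times\mathbb{Z}$ with lexicographic order; its copies of $\mathbb{Z}$ are the sets $\{a\}\times\mathbb{Z}$; $(a,z)+k=(a,z+k)$. $\mathrm{suc}^p=\{(x,x+p)\}$ for $p\in\mathbb{Z}$ and $\mathrm{suc}=\mathrm{suc}^1$. Relations first-order definable in $(\mathbb{Q}.\mathbb{Z};\mathrm{suc})$ have quantifier-free definitions using literals $\mathrm{suc}^p(x,y)$ and their negations. A DNF formula over such literals is reduced if removing any literal or any disjunct yields a formula not equivalent to it over $(\mathbb{Q}.\mathbb{Z};\mathrm{suc})$, and positive if it contains no negated literals. A binary relation first-order definable in $(\mathbb{Q}.\mathbb{Z};\mathrm{suc})$ is trivial if it is primitive positive definable in $(\mathbb{Q}.\mathbb{Z};\mathrm{suc})$, non-trivial otherwise. Its distance degree is the supremum of $|x-y|$ over pairs $(x,y)$ in the relation with $x,y$ in the same copy of $\mathbb{Z}$;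 it is infinite if this supremum is $\infty$. *)

theory Defs
  imports Main "HOL-Library.Extended_Nat"
begin

type_synonym qz = "rat \<times> int"

text \<open>(a,z) + k = (a, z+k); the copies of Z are the sets {a} x Z.\<close>
definition qz_add :: "qz \<Rightarrow> int \<Rightarrow> qz" where
  "qz_add x k = (fst x, snd x + k)"

definition suc_rel :: "qz list set" where
  "suc_rel = {[x, qz_add x 1] | x. True}"

datatype fo = FSuc nat nat | FEq nat nat | FNeg fo | FConj fo fo | FEx nat fo

fun fo_sat :: "fo \<Rightarrow> (nat \<Rightarrow> qz) \<Rightarrow> bool" where
  "fo_sat (FSuc i j) s = ((s i, s j) \<in> {(x, y). [x, y] \<in> suc_rel})"
| "fo_sat (FEq i j) s = (s i = s j)"
| "fo_sat (FNeg \<phi>) s = (\<not> fo_sat \<phi> s)"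
| "fo_sat (FConj \<phi> \<psi>) s = (fo_sat \<phi> s \<and> fo_sat \<psi> s)"
| "fo_sat (FEx v \<phi>) s = (\<exists>x. fo_sat \<phi> (s(v := x)))"

fun fo_fv :: "fo \<Rightarrow> nat set" where
  "fo_fv (FSuc i j) = {i, j}"
| "fo_fv (FEq i j) = {i, j}"
| "fo_fv (FNeg \<phi>) = fo_fv \<phi>"
| "fo_fv (FConj \<phi> \<psi>) = fo_fv \<phi> \<union> fo_fv \<psi>"
| "fo_fv (FEx v \<phi>) = fo_fv \<phi> - {v}"

definition fo_definable :: "nat \<Rightarrow> qz list set \<Rightarrow> bool" where
  "fo_definable n R \<longleftrightarrow>
     (\<exists>\<phi>. fo_fv \<phi> \<subseteq> {..<n} \<and> R = {t. length t = n \<and> fo_sat \<phi> (\<lambda>i. t ! i)})"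

datatype pp = PAtom "qz list set" "nat list" | PEq nat nat | PConj pp pp | PEx nat pp

fun pp_sat :: "pp \<Rightarrow> (nat \<Rightarrow> qz) \<Rightarrow> bool" where
  "pp_sat (PAtom R vs) s = (map s vs \<in> R)"
| "pp_sat (PEq i j) s = (s i = s j)"
| "pp_sat (PConj \<phi> \<psi>) s = (pp_sat \<phi> s \<and> pp_sat \<psi> s)"
| "pp_sat (PEx v \<phi>) s = (\<exists>x. pp_sat \<phi> (s(v := x)))"

fun pp_fv :: "pp \<Rightarrow> nat set" where
  "pp_fv (PAtom R vs) = set vs"
| "pp_fv (PEq i j) = {i, j}"
| "pp_fv (PConj \<phi> \<psi>) = pp_fv \<phi> \<union> pp_fv \<psi>"
| "pp_fv (PEx v \<phi>) = pp_fv \<phi> - {v}"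

fun pp_atoms :: "pp \<Rightarrow> qz list set set" where
  "pp_atoms (PAtom R vs) = {R}"
| "pp_atoms (PEq i j) = {}"
| "pp_atoms (PConj \<phi> \<psi>) = pp_atoms \<phi> \<union> pp_atoms \<psi>"
| "pp_atoms (PEx v \<phi>) = pp_atoms \<phi>"

definition pp_definable :: "qz list set set \<Rightarrow> nat \<Rightarrow> qz list set \<Rightarrow> bool" where
  "pp_definable A n R \<longleftrightarrow>
     (\<exists>\<phi>. pp_atoms \<phi> \<subseteq> A \<and> pp_fv \<phi> \<subseteq> {..<n}
          \<and> R = {t. length t = n \<and> pp_sat \<phi> (\<lambda>i. t ! i)})"

type_synonym qz_structure = "(nat \<times> qz list set) set"

definition wf_structure :: "qz_structure \<Rightarrow> bool" where
  "wf_structure \<Gamma> \<longleftrightarrow> (\<forall>(n, R) \<in> \<Gamma>. R \<subseteq> {t. length t = n})"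

definition fo_definable_structure :: "qz_structure \<Rightarrow> bool" where
  "fo_definable_structure \<Gamma> \<longleftrightarrow> (\<forall>(n, R) \<in> \<Gamma>. fo_definable n R)"

definition endomorphism :: "qz_structure \<Rightarrow> (qz \<Rightarrow> qz) \<Rightarrow> bool" where
  "endomorphism \<Gamma> e \<longleftrightarrow> (\<forall>(n, R) \<in> \<Gamma>. \<forall>t \<in> R. map e t \<in> R)"

definition nontrivial_binary :: "qz list set \<Rightarrow> bool" where
  "nontrivial_binary S \<longleftrightarrow> fo_definable 2 S \<and> \<not> pp_definable {suc_rel} 2 S"

definition distance_degree :: "qz list set \<Rightarrow> enat" where
  "distance_degree S =
     (SUP t \<in> {t \<in> S. fst (t ! 0) = fst (t ! 1)}. enat (nat \<bar>snd (t ! 1) - snd (t ! 0)\<bar>))"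

text \<open>A literal (b, p, i, j): if b then suc^p(x_i,x_j) else its negation.
  A DNF formula is a list of disjuncts, each a list of literals.\<close>
type_synonym lit = "bool \<times> int \<times> nat \<times> nat"
type_synonym dnf = "lit list list"

fun lit_sat :: "lit \<Rightarrow> (nat \<Rightarrow> qz) \<Rightarrow> bool" where
  "lit_sat (b, p, i, j) s = (b \<longleftrightarrow> s j = qz_add (s i) p)"

definition dnf_sat :: "dnf \<Rightarrow> (nat \<Rightarrow> qz) \<Rightarrow> bool" where
  "dnf_sat D s \<longleftrightarrow> (\<exists>c \<in> set D. \<forall>l \<in> set c. lit_sat l s)"

definition dnf_equiv :: "dnf \<Rightarrow> dnf \<Rightarrow> bool" where
  "dnf_equiv D D' \<longleftrightarrow> (\<forall>s. dnf_sat D s = dnf_sat D' s)"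

definition dnf_defines :: "nat \<Rightarrow> dnf \<Rightarrow> qz list set \<Rightarrow> bool" where
  "dnf_defines n D R \<longleftrightarrow>
     (\<forall>c \<in> set D. \<forall>(b, p, i, j) \<in> set c. i < n \<and> j < n)
     \<and> R = {t. length t = n \<and> dnf_sat D (\<lambda>i. t ! i)}"

definition reduced_dnf :: "dnf \<Rightarrow> bool" where
  "reduced_dnf D \<longleftrightarrow>
     (\<forall>i < length D. \<not> dnf_equiv D (take i D @ drop (Suc i) D))
     \<and> (\<forall>i < length D. \<forall>j < length (D ! i).
          \<not> dnf_equiv D (D[i := take j (D ! i) @ drop (Suc j) (D ! i)]))"

definition positive_dnf :: "dnf \<Rightarrow> bool" where
  "positive_dnf D \<longleftrightarrow> (\<forall>c \<in> set D. \<forall>l \<in> set c. fst l)"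

end

theory Submission
  imports Defs
begin


lemma qz_add_0[simp]: "qz_add x 0 = x" by (simp add: qz_add_def)
lemma qz_add_add[simp]: "qz_add (qz_add x a) b = qz_add x (a + b)" by (simp add: qz_add_def)
lemma qz_add_fst[simp]: "fst (qz_add x a) = fst x" by (simp add: qz_add_def)
lemma qz_add_snd[simp]: "snd (qz_add x a) = snd x + a" by (simp add: qz_add_def)
lemma qz_add_eq_iff: "y = qz_add x c \<longleftrightarrow> fst y = fst x \<and> snd y = snd x + c"
  by (auto simp: qz_add_def prod_eq_iff)
lemma qz_add_cancel[simp]: "qz_add x a = qz_add x b \<longleftrightarrow> a = b" by (auto simp: qz_add_def)
lemma qz_add_self[simp]: "x = qz_add x a \<longleftrightarrow> a = 0" by (auto simp: qz_add_eq_iff)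
lemma qz_add_flip: "y = qz_add x c \<longleftrightarrow> x = qz_add y (-c)" by (auto simp: qz_add_eq_iff)

lemma suc_rel_iff[simp]: "[x, y] \<in> suc_rel \<longleftrightarrow> y = qz_add x 1"
  unfolding suc_rel_def mem_Collect_eq by blast

lemma lit_sat_def': "lit_sat l s = (fst l \<longleftrightarrow> s (snd (snd (snd l))) = qz_add (s (fst (snd (snd l)))) (fst (snd l)))"
  by (cases l) auto

fun lvars :: "lit \<Rightarrow> nat set" where "lvars (b,p,i,j) = {i,j}"
definition cvars :: "lit list \<Rightarrow> nat set" where "cvars c = (\<Union>l\<in>set c. lvars l)"
definition dvars :: "dnf \<Rightarrow> nat set" where "dvars D = (\<Union>c\<in>set D. cvars c)"

lemma lit_sat_cong: "(\<And>x. x \<in> lvars l \<Longrightarrow> s x = s' x) \<Longrightarrow> lit_sat l s = lit_sat l s'"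
  by (cases l) auto

declare lit_sat.simps[simp del]

lemma dnf_sat_cong: "(\<And>x. x \<in> dvars D \<Longrightarrow> s x = s' x) \<Longrightarrow> dnf_sat D s = dnf_sat D s'"
proof -
  assume h: "\<And>x. x \<in> dvars D \<Longrightarrow> s x = s' x"
  have "lit_sat l s = lit_sat l s'" if "c \<in> set D" "l \<in> set c" for c l
  proof (rule lit_sat_cong)
    fix x assume "x \<in> lvars l"
    then have "x \<in> dvars D" using that unfolding dvars_def cvars_def by blast
    then show "s x = s' x" by (rule h)
  qed
  then show ?thesis unfolding dnf_sat_def by (intro bex_cong ball_cong refl) blast
qed

section \<open>QE\<close>

fun negl :: "lit \<Rightarrow> lit" where "negl (b,p,i,j) = (\<not> b, p, i, j)"
lemma negl_sat[simp]: "lit_sat (negl l) s = (\<not> lit_sat l s)" by (cases l) (auto simp: lit_sat.simps)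
lemma negl_vars[simp]: "lvars (negl l) = lvars l" by (cases l) auto

definition and_dnf :: "dnf \<Rightarrow> dnf \<Rightarrow> dnf" where
  "and_dnf D1 D2 = concat (map (\<lambda>c1. map (\<lambda>c2. c1 @ c2) D2) D1)"

lemma set_and_dnf: "c \<in> set (and_dnf D1 D2) \<longleftrightarrow> (\<exists>c1\<in>set D1. \<exists>c2\<in>set D2. c = c1 @ c2)"
  unfolding and_dnf_def by auto

lemma and_dnf_sat[simp]: "dnf_sat (and_dnf D1 D2) s = (dnf_sat D1 s \<and> dnf_sat D2 s)"
proof
  assume "dnf_sat (and_dnf D1 D2) s"
  then obtain c where c: "c \<in> set (and_dnf D1 D2)" "\<forall>l\<in>set c. lit_sat l s" unfolding dnf_sat_def by blast
  then obtain c1 c2 where cc: "c1 \<in> set D1" "c2 \<in> set D2" "c = c1 @ c2" unfolding set_and_dnf by blast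
  then have "\<forall>l\<in>set c1. lit_sat l s" "\<forall>l\<in>set c2. lit_sat l s" using c(2) by auto
  then show "dnf_sat D1 s \<and> dnf_sat D2 s" using cc unfolding dnf_sat_def by auto
next
  assume "dnf_sat D1 s \<and> dnf_sat D2 s"
  then obtain c1 c2 where "c1 \<in> set D1" "c2 \<in> set D2" "\<forall>l\<in>set c1. lit_sat l s" "\<forall>l\<in>set c2. lit_sat l s"
    unfolding dnf_sat_def by blast
  moreover then have "c1 @ c2 \<in> set (and_dnf D1 D2)" unfolding set_and_dnf by blast
  moreover have "\<forall>l\<in>set (c1 @ c2). lit_sat l s" using calculation by auto
  ultimately show "dnf_sat (and_dnf D1 D2) s" unfolding dnf_sat_def by blast
qed

lemma and_dnf_vars: "dvars (and_dnf D1 D2) \<subseteq> dvars D1 \<union> dvars D2"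
proof
  fix x assume "x \<in> dvars (and_dnf D1 D2)"
  then obtain c where c: "c \<in> set (and_dnf D1 D2)" "x \<in> cvars c" unfolding dvars_def by blast
  then obtain c1 c2 where "c1 \<in> set D1" "c2 \<in> set D2" "c = c1 @ c2" unfolding set_and_dnf by blast
  then show "x \<in> dvars D1 \<union> dvars D2" using c(2) unfolding dvars_def cvars_def by auto
qed

definition neg_dnf :: "dnf \<Rightarrow> dnf" where
  "neg_dnf D = foldr (\<lambda>c acc. and_dnf (map (\<lambda>l. [negl l]) c) acc) D [[]]"

lemma neg_dnf_Cons: "neg_dnf (c # D) = and_dnf (map (\<lambda>l. [negl l]) c) (neg_dnf D)"
  by (simp add: neg_dnf_def)

lemma dnf_sat_Cons: "dnf_sat (c # D) s = ((\<forall>l\<in>set c. lit_sat l s) \<or> dnf_sat D s)"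
  by (simp add: dnf_sat_def)

lemma neg_dnf_sat[simp]: "dnf_sat (neg_dnf D) s = (\<not> dnf_sat D s)"
proof (induction D)
  case Nil then show ?case by (simp add: neg_dnf_def dnf_sat_def)
next
  case (Cons c D)
  have "dnf_sat (map (\<lambda>l. [negl l]) c) s = (\<exists>l\<in>set c. \<not> lit_sat l s)"
    by (auto simp: dnf_sat_def)
  then show ?case using Cons by (simp add: neg_dnf_Cons dnf_sat_Cons)
qed

lemma dvars_Cons: "dvars (c # D) = cvars c \<union> dvars D" by (simp add: dvars_def)

lemma neg_dnf_vars: "dvars (neg_dnf D) \<subseteq> dvars D"
proof (induction D)
  case Nil then show ?case by (simp add: neg_dnf_def dvars_def cvars_def)
next
  case (Cons c D)
  have "dvars (map (\<lambda>l. [negl l]) c) \<subseteq> cvars c"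
  proof
    fix x assume "x \<in> dvars (map (\<lambda>l. [negl l]) c)"
    then obtain l where "l \<in> set c" "x \<in> lvars (negl l)" unfolding dvars_def cvars_def by auto
    then show "x \<in> cvars c" unfolding cvars_def by auto
  qed
  then have "dvars (neg_dnf (c # D)) \<subseteq> cvars c \<union> dvars D"
    using Cons and_dnf_vars[of "map (\<lambda>l. [negl l]) c" "neg_dnf D"] by (simp only: neg_dnf_Cons) blast
  then show ?case by (simp only: dvars_Cons)
qed

fun mentions :: "nat \<Rightarrow> lit \<Rightarrow> bool" where "mentions v (b,p,i,j) = (i = v \<or> j = v)"
fun is_vv :: "nat \<Rightarrow> lit \<Rightarrow> bool" where "is_vv v (b,p,i,j) = (i = v \<and> j = v)"
fun vv_ok :: "lit \<Rightarrow> bool" where "vv_ok (b,p,i,j) = (b \<longleftrightarrow> p = 0)"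
fun pos_link :: "nat \<Rightarrow> lit \<Rightarrow> bool" where
  "pos_link v (b,p,i,j) = (b \<and> (i = v \<or> j = v) \<and> \<not> (i = v \<and> j = v))"
fun link_w :: "nat \<Rightarrow> lit \<Rightarrow> nat" where "link_w v (b,p,i,j) = (if i = v then j else i)"
fun link_c :: "nat \<Rightarrow> lit \<Rightarrow> int" where "link_c v (b,p,i,j) = (if i = v then -p else p)"
fun subst :: "nat \<Rightarrow> nat \<Rightarrow> int \<Rightarrow> lit \<Rightarrow> lit" where
  "subst v w cc (b,q,i,j) =
     (if i = v \<and> j \<noteq> v then (b, cc + q, w, j)
      else if j = v \<and> i \<noteq> v then (b, q - cc, i, w) else (b,q,i,j))"

definition elim :: "nat \<Rightarrow> lit list \<Rightarrow> dnf" where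
  "elim v c = (if \<exists>l\<in>set c. is_vv v l \<and> \<not> vv_ok l then [] else
     (let c0 = filter (\<lambda>l. \<not> is_vv v l) c in
      case find (pos_link v) c0 of
        Some l \<Rightarrow> [map (subst v (link_w v l) (link_c v l)) c0]
      | None \<Rightarrow> [filter (\<lambda>l. \<not> mentions v l) c0]))"

lemma vv_sat: "is_vv v l \<Longrightarrow> lit_sat l s = vv_ok l" by (cases l) (auto simp: lit_sat.simps)

lemma link_sat: "pos_link v l \<Longrightarrow> lit_sat l s = (s v = qz_add (s (link_w v l)) (link_c v l))"
  by (cases l) (auto simp: qz_add_eq_iff lit_sat.simps)

lemma find_Some_mem: "find P xs = Some x \<Longrightarrow> x \<in> set xs \<and> P x"
  by (induction xs) (auto split: if_splits)

lemma link_w_ne: "pos_link v l \<Longrightarrow> link_w v l \<noteq> v" by (cases l) auto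
lemma link_w_in: "pos_link v l \<Longrightarrow> link_w v l \<in> lvars l" by (cases l) auto

lemma subst_sat: "\<not> is_vv v l \<Longrightarrow> s v = qz_add (s w) cc \<Longrightarrow> lit_sat (subst v w cc l) s = lit_sat l s"
  by (cases l) (auto simp: qz_add_eq_iff lit_sat.simps)

lemma subst_nomention: "\<not> is_vv v l \<Longrightarrow> w \<noteq> v \<Longrightarrow> v \<notin> lvars (subst v w cc l)"
  by (cases l) auto

lemma subst_vars: "lvars (subst v w cc l) \<subseteq> lvars l \<union> {w}"
  by (cases l) auto

lemma nomention_vars: "\<not> mentions v l \<longleftrightarrow> v \<notin> lvars l" by (cases l) auto

declare subst.simps[simp del] is_vv.simps[simp del] mentions.simps[simp del] pos_link.simps[simp del]
  link_w.simps[simp del] link_c.simps[simp del] vv_ok.simps[simp del]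

lemma cvars_map: "cvars (map f c) = (\<Union>l\<in>set c. lvars (f l))" by (simp add: cvars_def)
lemma cvars_filter: "cvars (filter P c) = (\<Union>l\<in>{l\<in>set c. P l}. lvars l)" by (simp add: cvars_def)

lemma lit_upd: "v \<notin> lvars l \<Longrightarrow> lit_sat l (s(v := x)) = lit_sat l s"
  by (rule lit_sat_cong) auto

lemma neg_free0: "\<not> pos_link v (b,p,i,j) \<Longrightarrow> \<not> is_vv v (b,p,i,j) \<Longrightarrow> mentions v (b,p,i,j) \<Longrightarrow>
   \<exists>y. \<forall>x. x \<noteq> y \<longrightarrow> lit_sat (b,p,i,j) (s(v := x))"
proof (cases "i = v")
  case True
  assume a: "\<not> pos_link v (b,p,i,j)" "\<not> is_vv v (b,p,i,j)" "mentions v (b,p,i,j)"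
  then have "j \<noteq> v" "\<not> b" using True by (auto simp: pos_link.simps is_vv.simps mentions.simps)
  have h: "\<forall>x. x \<noteq> qz_add (s j) (-p) \<longrightarrow> s j \<noteq> qz_add x p"
    by (metis qz_add_flip)
  have "lit_sat (b,p,i,j) (s(v:=x)) \<longleftrightarrow> s j \<noteq> qz_add x p" for x
    using True `j \<noteq> v` `\<not> b` by (simp add: lit_sat.simps)
  then show ?thesis using h by blast
next
  case False
  assume a: "\<not> pos_link v (b,p,i,j)" "\<not> is_vv v (b,p,i,j)" "mentions v (b,p,i,j)"
  then have "j = v" "\<not> b" using False by (auto simp: pos_link.simps is_vv.simps mentions.simps)
  then have "lit_sat (b,p,i,j) (s(v:=x)) \<longleftrightarrow> x \<noteq> qz_add (s i) p" for x
    using False by (simp add: lit_sat.simps)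
  then show ?thesis by blast
qed

lemma neg_free: "\<not> pos_link v l \<Longrightarrow> \<not> is_vv v l \<Longrightarrow> mentions v l \<Longrightarrow>
   \<exists>y. \<forall>x. x \<noteq> y \<longrightarrow> lit_sat l (s(v := x))"
  using neg_free0 by (cases l) blast

lemma dnf_sat_conj1: "dnf_sat [c] s = (\<forall>l\<in>set c. lit_sat l s)" by (simp add: dnf_sat_def)

lemma infinite_qz: "infinite (UNIV :: qz set)"
  by (simp add: finite_prod infinite_UNIV_char_0)

lemma elim_sat: "dnf_sat (elim v c) s = (\<exists>x. \<forall>l\<in>set c. lit_sat l (s(v := x)))"
proof (cases "\<exists>l\<in>set c. is_vv v l \<and> \<not> vv_ok l")
  case True
  then obtain l where l: "l \<in> set c" "is_vv v l" "\<not> vv_ok l" by blast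
  have "\<not> lit_sat l (s(v:=x))" for x using l vv_sat by blast
  then show ?thesis using True l by (auto simp: elim_def dnf_sat_def)
next
  case False
  define c0 where "c0 = filter (\<lambda>l. \<not> is_vv v l) c"
  have eq0: "(\<forall>l\<in>set c. lit_sat l t) = (\<forall>l\<in>set c0. lit_sat l t)" for t
  proof -
    have "\<forall>l\<in>set c. is_vv v l \<longrightarrow> lit_sat l t" using False vv_sat by blast
    then show ?thesis by (auto simp: c0_def)
  qed
  show ?thesis
  proof (cases "find (pos_link v) c0")
    case (Some l0)
    have l0: "l0 \<in> set c0" "pos_link v l0" using find_Some_mem[OF Some] by auto
    define w where "w = link_w v l0"
    define cc where "cc = link_c v l0"
    have wv: "w \<noteq> v" using l0 by (simp add: w_def link_w_ne)
    have nvv: "\<forall>l\<in>set c0. \<not> is_vv v l" by (simp add: c0_def)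
    have el: "elim v c = [map (subst v w cc) c0]"
      using False Some by (simp add: elim_def c0_def w_def cc_def)
    show ?thesis
    proof
      assume "dnf_sat (elim v c) s"
      then have h: "\<forall>l\<in>set c0. lit_sat (subst v w cc l) s" by (simp add: el dnf_sat_def)
      define x where "x = qz_add (s w) cc"
      have sx: "(s(v:=x)) v = qz_add ((s(v:=x)) w) cc" using wv by (simp add: x_def)
      have "\<forall>l\<in>set c0. lit_sat l (s(v := x))"
      proof
        fix l assume l: "l \<in> set c0"
        have "lit_sat (subst v w cc l) (s(v:=x)) = lit_sat (subst v w cc l) s"
          using subst_nomention[of v l w cc] nvv l wv by (intro lit_upd) auto
        then show "lit_sat l (s(v := x))" using subst_sat[OF _ sx, of l] nvv l h by metis
      qed
      then show "\<exists>x. \<forall>l\<in>set c. lit_sat l (s(v := x))" using eq0 by blast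
    next
      assume "\<exists>x. \<forall>l\<in>set c. lit_sat l (s(v := x))"
      then obtain x where hx: "\<forall>l\<in>set c0. lit_sat l (s(v := x))" using eq0 by blast
      have sx: "(s(v:=x)) v = qz_add ((s(v:=x)) w) cc"
        using hx l0 link_sat[of v l0 "s(v:=x)"] by (simp add: w_def cc_def)
      have "\<forall>l\<in>set c0. lit_sat (subst v w cc l) s"
      proof
        fix l assume l: "l \<in> set c0"
        have "lit_sat (subst v w cc l) (s(v:=x)) = lit_sat (subst v w cc l) s"
          using subst_nomention[of v l w cc] nvv l wv by (intro lit_upd) auto
        then show "lit_sat (subst v w cc l) s" using subst_sat[OF _ sx, of l] nvv l hx by metis
      qed
      then show "dnf_sat (elim v c) s" by (simp add: el dnf_sat_def)
    qed
  next
    case None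
    have nolink: "\<forall>l\<in>set c0. \<not> pos_link v l" using None find_None_iff[of "pos_link v" c0] by blast
    have nvv: "\<forall>l\<in>set c0. \<not> is_vv v l" by (simp add: c0_def)
    have el: "elim v c = [filter (\<lambda>l. \<not> mentions v l) c0]"
      using False None by (simp add: elim_def c0_def)
    show ?thesis
    proof
      assume "dnf_sat (elim v c) s"
      then have "\<forall>l\<in>set (filter (\<lambda>l. \<not> mentions v l) c0). lit_sat l s"
        by (simp only: el dnf_sat_conj1)
      then have h: "\<forall>l\<in>set c0. \<not> mentions v l \<longrightarrow> lit_sat l s"
        by (simp only: set_filter) blast
      have "\<forall>l\<in>set c0. mentions v l \<longrightarrow> (\<exists>y. \<forall>x. x \<noteq> y \<longrightarrow> lit_sat l (s(v := x)))"
        using neg_free nolink nvv by blast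
      then obtain f where f: "\<forall>l\<in>set c0. mentions v l \<longrightarrow> (\<forall>x. x \<noteq> f l \<longrightarrow> lit_sat l (s(v := x)))"
        by metis
      have "finite (f ` set c0)" by simp
      then obtain x where x: "x \<notin> f ` set c0" using infinite_qz ex_new_if_finite by blast
      have "\<forall>l\<in>set c0. lit_sat l (s(v := x))"
      proof
        fix l assume l: "l \<in> set c0"
        show "lit_sat l (s(v := x))"
        proof (cases "mentions v l")
          case True then show ?thesis using f l x by (metis image_eqI)
        next
          case False then show ?thesis using h l lit_upd[of v l s x] nomention_vars by auto
        qed
      qed
      then show "\<exists>x. \<forall>l\<in>set c. lit_sat l (s(v := x))" using eq0 by blast
    next
      assume "\<exists>x. \<forall>l\<in>set c. lit_sat l (s(v := x))"
      then obtain x where hx: "\<forall>l\<in>set c0. lit_sat l (s(v := x))" using eq0 by blast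
      have "\<forall>l\<in>set (filter (\<lambda>l. \<not> mentions v l) c0). lit_sat l s"
      proof
        fix l assume "l \<in> set (filter (\<lambda>l. \<not> mentions v l) c0)"
        then have "l \<in> set c0" "\<not> mentions v l" by auto
        then show "lit_sat l s" using hx lit_upd[of v l s x] nomention_vars by blast
      qed
      then show "dnf_sat (elim v c) s" by (simp only: el dnf_sat_conj1)
    qed
  qed
qed

lemma elim_vars: "dvars (elim v c) \<subseteq> cvars c - {v}"
proof -
  let ?c0 = "filter (\<lambda>l. \<not> is_vv v l) c"
  have A: "x \<in> cvars c \<and> x \<noteq> v"
    if "x \<in> cvars (map (subst v (link_w v l) (link_c v l)) ?c0)" "find (pos_link v) ?c0 = Some l" for x l
  proof -
    from that(1) obtain l' where l': "l' \<in> set ?c0" "x \<in> lvars (subst v (link_w v l) (link_c v l) l')"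
      unfolding cvars_map by blast
    have l: "l \<in> set c" "pos_link v l" using find_Some_mem[OF that(2)] by auto
    have "x \<in> lvars l' \<union> {link_w v l}" using subst_vars l'(2) by blast
    moreover have "link_w v l \<in> cvars c" using link_w_in[OF l(2)] l(1) unfolding cvars_def by blast
    moreover have "lvars l' \<subseteq> cvars c" using l'(1) unfolding cvars_def by simp blast
    moreover have "\<not> is_vv v l'" using l'(1) by simp
    then have "x \<noteq> v" using subst_nomention[of v l' "link_w v l" "link_c v l"] link_w_ne[OF l(2)] l'(2) by blast
    ultimately show ?thesis by blast
  qed
  have B: "x \<in> cvars c \<and> x \<noteq> v" if "x \<in> cvars (filter (\<lambda>l. \<not> mentions v l) ?c0)" for x
  proof -
    from that obtain l' where "l' \<in> set c" "\<not> mentions v l'" "x \<in> lvars l'" unfolding cvars_filter by auto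
    then show ?thesis using nomention_vars unfolding cvars_def by blast
  qed
  show ?thesis
  proof
    fix x assume "x \<in> dvars (elim v c)"
    then obtain c' where c': "c' \<in> set (elim v c)" "x \<in> cvars c'" unfolding dvars_def by blast
    show "x \<in> cvars c - {v}"
    proof (cases "find (pos_link v) ?c0")
      case None then have "c' = filter (\<lambda>l. \<not> mentions v l) ?c0" using c'(1)
        by (auto simp: elim_def split: if_splits)
      then show ?thesis using B c'(2) by blast
    next
      case (Some l) then have "c' = map (subst v (link_w v l) (link_c v l)) ?c0" using c'(1)
        by (auto simp: elim_def split: if_splits)
      then show ?thesis using A[OF _ Some] c'(2) by blast
    qed
  qed
qed

lemma dnf_sat_single: "dnf_sat [[l]] s = lit_sat l s" by (simp add: dnf_sat_def)

fun qe :: "fo \<Rightarrow> dnf" where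
  "qe (FSuc i j) = [[(True, 1, i, j)]]"
| "qe (FEq i j) = [[(True, 0, i, j)]]"
| "qe (FNeg \<phi>) = neg_dnf (qe \<phi>)"
| "qe (FConj \<phi> \<psi>) = and_dnf (qe \<phi>) (qe \<psi>)"
| "qe (FEx v \<phi>) = concat (map (elim v) (qe \<phi>))"

lemma qe_sat: "dnf_sat (qe \<phi>) s = fo_sat \<phi> s"
proof (induction \<phi> arbitrary: s)
  case (FEx v \<phi>)
  have "dnf_sat (qe (FEx v \<phi>)) s = (\<exists>c\<in>set (qe \<phi>). dnf_sat (elim v c) s)"
    by (auto simp: dnf_sat_def)
  also have "\<dots> = (\<exists>c\<in>set (qe \<phi>). \<exists>x. \<forall>l\<in>set c. lit_sat l (s(v := x)))"
    by (simp add: elim_sat)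
  also have "\<dots> = (\<exists>x. dnf_sat (qe \<phi>) (s(v := x)))" by (auto simp: dnf_sat_def)
  finally show ?case using FEx.IH by (simp only: fo_sat.simps)
qed (auto simp: dnf_sat_single lit_sat.simps)

lemma qe_vars: "dvars (qe \<phi>) \<subseteq> fo_fv \<phi>"
proof (induction \<phi>)
  case (FNeg \<phi>)
  have "dvars (qe (FNeg \<phi>)) \<subseteq> dvars (qe \<phi>)" using neg_dnf_vars by simp
  then show ?case using FNeg.IH by simp
next
  case (FConj \<phi>1 \<phi>2)
  have "dvars (qe (FConj \<phi>1 \<phi>2)) \<subseteq> dvars (qe \<phi>1) \<union> dvars (qe \<phi>2)" using and_dnf_vars by simp
  then show ?case using FConj.IH by auto
next
  case (FEx v \<phi>)
  have "dvars (qe (FEx v \<phi>)) = (\<Union>c\<in>set (qe \<phi>). dvars (elim v c))"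
    by (auto simp: dvars_def)
  also have "\<dots> \<subseteq> (\<Union>c\<in>set (qe \<phi>). cvars c - {v})" using elim_vars by blast
  also have "\<dots> = dvars (qe \<phi>) - {v}" by (auto simp: dvars_def)
  finally show ?case using FEx.IH by auto
qed (auto simp: dvars_def cvars_def)



lemma dnf_bound_iff: "(\<forall>c \<in> set D. \<forall>(b, p, i, j) \<in> set c. i < n \<and> j < n) \<longleftrightarrow> dvars D \<subseteq> {..<n}"
proof
  assume h: "\<forall>c\<in>set D. \<forall>(b,p,i,j)\<in>set c. i<n \<and> j<n"
  show "dvars D \<subseteq> {..<n}"
  proof
    fix x assume "x \<in> dvars D"
    then obtain c l where "c \<in> set D" "l \<in> set c" "x \<in> lvars l" unfolding dvars_def cvars_def by blast
    then show "x \<in> {..<n}" using h by (cases l) fastforce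
  qed
next
  assume h: "dvars D \<subseteq> {..<n}"
  show "\<forall>c\<in>set D. \<forall>(b,p,i,j)\<in>set c. i<n \<and> j<n"
  proof (intro ballI, clarify)
    fix c b p i j assume "c \<in> set D" "(b,p,i,j) \<in> set c"
    then have "{i,j} \<subseteq> dvars D" unfolding dvars_def cvars_def by force
    then show "i < n \<and> j < n" using h by auto
  qed
qed

lemma fo_to_dnf:
  assumes "fo_definable n R" shows "\<exists>D. dnf_defines n D R"
proof -
  obtain \<phi> where \<phi>: "fo_fv \<phi> \<subseteq> {..<n}" "R = {t. length t = n \<and> fo_sat \<phi> (\<lambda>i. t ! i)}"
    using assms by (auto simp: fo_definable_def)
  have "dnf_defines n (qe \<phi>) R" unfolding dnf_defines_def dnf_bound_iff
    using \<phi> qe_vars[of \<phi>] qe_sat[of \<phi>] by auto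
  then show ?thesis by blast
qed

definition dsize :: "dnf \<Rightarrow> nat" where "dsize D = length D + sum_list (map length D)"

lemma set_remove_nth: "set (take i xs @ drop (Suc i) xs) \<subseteq> set xs"
  by (metis set_take_subset set_drop_subset_set_drop Suc_n_not_le_n drop_0 le_SucI subset_trans
       set_append Un_least le0)

lemma length_remove_nth: "i < length xs \<Longrightarrow> length (take i xs @ drop (Suc i) xs) = length xs - 1"
  by simp

lemma sum_list_remove_nth: "i < length xs \<Longrightarrow>
   sum_list (map f (take i xs @ drop (Suc i) xs)) + f (xs ! i) = sum_list (map (f::_\<Rightarrow>nat) xs)"
proof -
  assume i: "i < length xs"
  have "xs = take i xs @ xs ! i # drop (Suc i) xs" using i by (simp add: id_take_nth_drop)
  then have "sum_list (map f xs) = sum_list (map f (take i xs)) + f (xs ! i) + sum_list (map f (drop (Suc i) xs))"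
    by (metis add.assoc list.map(2) map_append sum_list.Cons sum_list_append)
  then show ?thesis by simp
qed

lemma sum_list_update: "i < length xs \<Longrightarrow>
   sum_list (map f (xs[i := y])) + f (xs ! i) = sum_list (map (f::_\<Rightarrow>nat) xs) + f y"
proof (induction xs arbitrary: i)
  case Nil then show ?case by simp
next
  case (Cons a xs) then show ?case by (cases i) auto
qed

lemma dvars_remove: "dvars (take i D @ drop (Suc i) D) \<subseteq> dvars D"
  using set_remove_nth[of i D] by (auto simp: dvars_def)

lemma dvars_update: "i < length D \<Longrightarrow> dvars (D[i := take j (D ! i) @ drop (Suc j) (D ! i)]) \<subseteq> dvars D"
proof -
  assume i: "i < length D"
  have "set (D[i := take j (D ! i) @ drop (Suc j) (D ! i)]) \<subseteq> insert (take j (D ! i) @ drop (Suc j) (D ! i)) (set D)"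
    by (rule set_update_subset_insert)
  moreover have "cvars (take j (D ! i) @ drop (Suc j) (D ! i)) \<subseteq> cvars (D ! i)"
    using set_remove_nth[of j "D ! i"] by (auto simp: cvars_def)
  moreover have "D ! i \<in> set D" using i by simp
  ultimately show ?thesis by (fastforce simp: dvars_def)
qed

lemma exists_reduced: "\<exists>D'. dnf_equiv D D' \<and> reduced_dnf D' \<and> dvars D' \<subseteq> dvars D"
proof (induction "dsize D" arbitrary: D rule: less_induct)
  case less
  show ?case
  proof (cases "reduced_dnf D")
    case True then show ?thesis by (auto simp: dnf_equiv_def)
  next
    case False
    then obtain D1 where D1: "dnf_equiv D D1" "dsize D1 < dsize D" "dvars D1 \<subseteq> dvars D"
    proof (cases "\<exists>i < length D. dnf_equiv D (take i D @ drop (Suc i) D)")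
      case True
      then obtain i where i: "i < length D" "dnf_equiv D (take i D @ drop (Suc i) D)" by blast
      have h1: "sum_list (map length (take i D @ drop (Suc i) D)) \<le> sum_list (map length D)"
        using sum_list_remove_nth[OF i(1), of length] by linarith
      have h2: "length (take i D @ drop (Suc i) D) = length D - 1" using i(1) by simp
      have "dsize (take i D @ drop (Suc i) D) < dsize D"
        using h1 i(1) unfolding dsize_def h2 by arith
      then show ?thesis using that i dvars_remove by blast
    next
      case F2: False
      then obtain i j where ij: "i < length D" "j < length (D ! i)"
        "dnf_equiv D (D[i := take j (D ! i) @ drop (Suc j) (D ! i)])"
        using False unfolding reduced_dnf_def by blast
      have "dsize (D[i := take j (D ! i) @ drop (Suc j) (D ! i)]) < dsize D"
        using ij sum_list_update[of i D length "take j (D ! i) @ drop (Suc j) (D ! i)"]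
        unfolding dsize_def by simp
      then show ?thesis using that ij dvars_update by blast
    qed
    then obtain D' where D': "dnf_equiv D1 D'" "reduced_dnf D'" "dvars D' \<subseteq> dvars D1"
      using less by blast
    have "dnf_equiv D D'" using D1(1) D'(1) unfolding dnf_equiv_def by simp
    then show ?thesis using D1(3) D'(2,3) by blast
  qed
qed

definition e0 :: "qz \<Rightarrow> qz" where "e0 x = (0, snd x)"

lemma e0_add[simp]: "e0 (qz_add x k) = qz_add (e0 x) k" by (simp add: e0_def qz_add_def)

lemma positive_preserved:
  assumes "dnf_defines n D R" "positive_dnf D" "t \<in> R"
  shows "map e0 t \<in> R"
proof -
  have t: "length t = n" "dnf_sat D (\<lambda>i. t ! i)" using assms by (auto simp: dnf_defines_def)
  then obtain c where c: "c \<in> set D" "\<forall>l\<in>set c. lit_sat l (\<lambda>i. t ! i)" by (auto simp: dnf_sat_def)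
  have "\<forall>l\<in>set c. lit_sat l (\<lambda>i. map e0 t ! i)"
  proof
    fix l assume l: "l \<in> set c"
    obtain b p i j where lb: "l = (b,p,i,j)" by (cases l)
    have "fst l" using assms(2) c(1) l unfolding positive_dnf_def by blast
    then have "b" using lb by simp
    have "i < n \<and> j < n" using assms(1) c(1) l unfolding dnf_defines_def lb by fastforce
    then have "i < n" "j < n" by auto
    then show "lit_sat l (\<lambda>i. map e0 t ! i)" using c l lb `b` t(1)
      by (metis e0_add lit_sat.simps nth_map)
  qed
  then show ?thesis using assms(1) t c by (auto simp: dnf_defines_def dnf_sat_def)
qed

lemma P1_P2:
  assumes "fo_definable_structure \<Gamma>"
    and "\<forall>(n, R) \<in> \<Gamma>. \<forall>D. dnf_defines n D R \<and> reduced_dnf D \<longrightarrow> positive_dnf D"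
  shows "\<exists>e a b. endomorphism \<Gamma> e \<and> fst a \<noteq> fst b \<and> fst (e a) = fst (e b)"
proof -
  have "endomorphism \<Gamma> e0"
    unfolding endomorphism_def
  proof (intro ballI, clarify)
    fix n R t assume nR: "(n, R) \<in> \<Gamma>" and t: "t \<in> R"
    have "fo_definable n R" using assms(1) nR unfolding fo_definable_structure_def by fast
    then obtain D where D: "dnf_defines n D R" using fo_to_dnf by blast
    obtain D' where D': "dnf_equiv D D'" "reduced_dnf D'" "dvars D' \<subseteq> dvars D"
      using exists_reduced by blast
    have "dnf_defines n D' R" using D D' unfolding dnf_defines_def dnf_bound_iff dnf_equiv_def by auto
    then show "map e0 t \<in> R" using positive_preserved assms(2) nR D' t by blast
  qed
  then show ?thesis by (intro exI[of _ e0] exI[of _ "(0,0)"] exI[of _ "(1,0)"]) (simp add: e0_def)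
qed



lemma pp_sat_cong: "(\<And>x. x \<in> pp_fv \<phi> \<Longrightarrow> s x = s' x) \<Longrightarrow> pp_sat \<phi> s = pp_sat \<phi> s'"
proof (induction \<phi> arbitrary: s s')
  case (PAtom R vs)
  have "map s vs = map s' vs" using PAtom.prems by (intro map_cong) auto
  then show ?case by (simp only: pp_sat.simps)
next
  case (PEx v \<phi>)
  have "pp_sat \<phi> (s(v := x)) = pp_sat \<phi> (s'(v := x))" for x
    using PEx.prems by (intro PEx.IH) auto
  then show ?case by simp
next
  case (PEq i j) then show ?case by simp
next
  case (PConj \<phi>1 \<phi>2)
  have "pp_sat \<phi>1 s = pp_sat \<phi>1 s'" by (rule PConj.IH(1)) (use PConj.prems in simp)
  moreover have "pp_sat \<phi>2 s = pp_sat \<phi>2 s'" by (rule PConj.IH(2)) (use PConj.prems in simp)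
  ultimately show ?case by simp
qed

lemma pp_endo: "endomorphism \<Gamma> e \<Longrightarrow> pp_atoms \<phi> \<subseteq> snd ` \<Gamma> \<Longrightarrow> pp_sat \<phi> s \<Longrightarrow> pp_sat \<phi> (e \<circ> s)"
proof (induction \<phi> arbitrary: s)
  case (PAtom R vs)
  then obtain n where "(n, R) \<in> \<Gamma>" by force
  then have "map e (map s vs) \<in> R" using PAtom unfolding endomorphism_def by fastforce
  then show ?case by (simp add: comp_def)
next
  case (PEx v \<phi>)
  then obtain x where x: "pp_sat \<phi> (s(v := x))" by auto
  have "pp_atoms \<phi> \<subseteq> snd ` \<Gamma>" using PEx.prems(2) by simp
  then have "pp_sat \<phi> (e \<circ> s(v := x))" using PEx.IH[OF PEx.prems(1)] x by blast
  moreover have "e \<circ> s(v := x) = (e \<circ> s)(v := e x)" by (auto simp: fun_eq_iff)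
  ultimately show ?case by (simp only: pp_sat.simps) metis
next
  case (PEq i j) then show ?case by simp
next
  case (PConj \<phi>1 \<phi>2) then show ?case by simp
qed

lemma pp_def_preserved:
  assumes "endomorphism \<Gamma> e" "pp_atoms \<phi> \<subseteq> snd ` \<Gamma>" "pp_fv \<phi> \<subseteq> {..<n}"
    and "S = {t. length t = n \<and> pp_sat \<phi> (\<lambda>i. t ! i)}" "t \<in> S"
  shows "map e t \<in> S"
proof -
  have t: "length t = n" "pp_sat \<phi> (\<lambda>i. t ! i)" using assms by auto
  have "pp_sat \<phi> (e \<circ> (\<lambda>i. t ! i))" using pp_endo assms(1,2) t(2) by blast
  moreover have "pp_sat \<phi> (e \<circ> (\<lambda>i. t ! i)) = pp_sat \<phi> (\<lambda>i. map e t ! i)"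
    using assms(3) t(1) by (intro pp_sat_cong) auto
  ultimately show ?thesis using assms(4) t(1) by auto
qed

lemma endo_suc1: "endomorphism \<Gamma> e \<Longrightarrow> (2, suc_rel) \<in> \<Gamma> \<Longrightarrow> e (qz_add x 1) = qz_add (e x) 1"
proof -
  assume a: "endomorphism \<Gamma> e" "(2, suc_rel) \<in> \<Gamma>"
  have "[x, qz_add x 1] \<in> suc_rel" by simp
  then have "map e [x, qz_add x 1] \<in> suc_rel" using a unfolding endomorphism_def by fast
  then show ?thesis by simp
qed

lemma endo_suc_nat: "endomorphism \<Gamma> e \<Longrightarrow> (2, suc_rel) \<in> \<Gamma> \<Longrightarrow> e (qz_add x (int n)) = qz_add (e x) (int n)"
proof (induction n)
  case 0 then show ?case by simp
next
  case (Suc n)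
  have "qz_add x (int (Suc n)) = qz_add (qz_add x (int n)) 1" by simp
  then show ?case using Suc endo_suc1[OF Suc.prems, of "qz_add x (int n)"] by (simp add: add.commute)
qed

lemma endo_suc: "endomorphism \<Gamma> e \<Longrightarrow> (2, suc_rel) \<in> \<Gamma> \<Longrightarrow> e (qz_add x k) = qz_add (e x) k"
proof (cases "k \<ge> 0")
  case True
  assume a: "endomorphism \<Gamma> e" "(2, suc_rel) \<in> \<Gamma>"
  then show ?thesis using endo_suc_nat[OF a, of x "nat k"] True by simp
next
  case False
  assume a: "endomorphism \<Gamma> e" "(2, suc_rel) \<in> \<Gamma>"
  have "e x = e (qz_add (qz_add x k) (int (nat (-k))))" using False by simp
  also have "\<dots> = qz_add (e (qz_add x k)) (int (nat (-k)))" by (rule endo_suc_nat[OF a])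
  finally have "e x = qz_add (e (qz_add x k)) (- k)" using False by simp
  then show ?thesis by (metis qz_add_flip minus_minus)
qed

lemma dnf_sat_equiv:
  assumes "dvars D \<subseteq> V" "\<forall>c\<in>set D. \<forall>l\<in>set c. P (fst (snd l))"
    and "\<And>i j p. i \<in> V \<Longrightarrow> j \<in> V \<Longrightarrow> P p \<Longrightarrow> (s j = qz_add (s i) p) = (s' j = qz_add (s' i) p)"
  shows "dnf_sat D s = dnf_sat D s'"
proof -
  have "lit_sat l s = lit_sat l s'" if "c \<in> set D" "l \<in> set c" for c l
  proof -
    obtain b p i j where l: "l = (b,p,i,j)" by (cases l)
    have "{i,j} \<subseteq> dvars D" using that l unfolding dvars_def cvars_def by force
    moreover have "P p" using assms(2) that l by force
    ultimately have "(s j = qz_add (s i) p) = (s' j = qz_add (s' i) p)" using assms(1) assms(3)[of i j p] by blast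
    then show ?thesis using l by (simp add: lit_sat.simps)
  qed
  then show ?thesis unfolding dnf_sat_def by (intro bex_cong ball_cong refl) blast
qed

lemma pair_lit: "i < 2 \<Longrightarrow> j < 2 \<Longrightarrow>
  ([x,y] ! j = qz_add ([x,y] ! i) p) =
   (if i = j then p = 0 else if i = 0 then fst y = fst x \<and> snd y = snd x + p
    else fst x = fst y \<and> snd x = snd y + p)"
  by (auto simp: less_2_cases_iff qz_add_eq_iff)

lemma less2_dvars: "dvars D \<subseteq> {..<2} \<Longrightarrow> dvars D \<subseteq> {i. i < 2}" by auto

lemma pair_equiv_all:
  assumes "dvars D \<subseteq> {..<2}" "fst x = fst y" "fst x' = fst y'" "snd y - snd x = snd y' - snd x'"
  shows "dnf_sat D (\<lambda>i. [x,y] ! i) = dnf_sat D (\<lambda>i. [x',y'] ! i)"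
proof (rule dnf_sat_equiv[OF assms(1), where P="\<lambda>_. True"])
  fix i j :: nat and p :: int assume "i \<in> {..<2}" "j \<in> {..<2}"
  then show "([x,y] ! j = qz_add ([x,y] ! i) p) = ([x',y'] ! j = qz_add ([x',y'] ! i) p)"
    using assms(2-4) by (simp add: pair_lit) linarith
qed auto

lemma pair_equiv_far:
  assumes "dvars D \<subseteq> {..<2}" "\<forall>c\<in>set D. \<forall>l\<in>set c. \<bar>fst (snd l)\<bar> \<le> M"
    "fst x = fst y" "\<bar>snd y - snd x\<bar> > M" "fst x' \<noteq> fst y'"
  shows "dnf_sat D (\<lambda>i. [x,y] ! i) = dnf_sat D (\<lambda>i. [x',y'] ! i)"
proof (rule dnf_sat_equiv[OF assms(1), where P="\<lambda>p. \<bar>p\<bar> \<le> M"])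
  fix i j :: nat and p :: int assume "i \<in> {..<2}" "j \<in> {..<2}" "\<bar>p\<bar> \<le> M"
  then show "([x,y] ! j = qz_add ([x,y] ! i) p) = ([x',y'] ! j = qz_add ([x',y'] ! i) p)"
    using assms(3-5) by (simp add: pair_lit) (auto simp: abs_if split: if_splits)
qed (use assms(2) in auto)

lemma dnf_bound: "\<exists>M. \<forall>c\<in>set D. \<forall>l\<in>set c. \<bar>fst (snd l)\<bar> \<le> (M::int)"
proof -
  define A where "A = (\<lambda>l. \<bar>fst (snd l)\<bar>) ` (\<Union>c\<in>set D. set c)"
  have "finite A" unfolding A_def by simp
  then have "\<forall>a\<in>A. a \<le> Max (insert 0 A)" by simp
  then show ?thesis unfolding A_def by blast
qed

lemma len2: "length t = 2 \<Longrightarrow> t = [t ! 0, t ! 1]"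
  by (cases t; cases "tl t") auto

lemma dd_inf:
  assumes "distance_degree S = \<infinity>"
  shows "\<exists>t\<in>S. fst (t ! 0) = fst (t ! 1) \<and> enat N < enat (nat \<bar>snd (t ! 1) - snd (t ! 0)\<bar>)"
proof -
  have "(SUP t \<in> {t \<in> S. fst (t ! 0) = fst (t ! 1)}. enat (nat \<bar>snd (t ! 1) - snd (t ! 0)\<bar>)) = top"
    using assms unfolding distance_degree_def by (simp add: top_enat_def)
  then have "\<forall>x<top. \<exists>t\<in>{t \<in> S. fst (t ! 0) = fst (t ! 1)}. x < enat (nat \<bar>snd (t ! 1) - snd (t ! 0)\<bar>)"
    by (simp only: SUP_eq_top_iff)
  moreover have "enat N < top" by (simp add: top_enat_def)
  ultimately show ?thesis by blast
qed

lemma all_pp: "pp_definable {suc_rel} 2 {t. length t = 2}"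
  unfolding pp_definable_def by (intro exI[of _ "PEq 0 0"]) auto

lemma P2_P3:
  assumes suc: "(2, suc_rel) \<in> \<Gamma>" and e: "endomorphism \<Gamma> e"
    and ab: "fst a \<noteq> fst b" "fst (e a) = fst (e b)"
  shows "\<not> (\<exists>S. pp_definable (snd ` \<Gamma>) 2 S \<and> nontrivial_binary S \<and> distance_degree S = \<infinity>)"
proof
  assume "\<exists>S. pp_definable (snd ` \<Gamma>) 2 S \<and> nontrivial_binary S \<and> distance_degree S = \<infinity>"
  then obtain S where S: "pp_definable (snd ` \<Gamma>) 2 S" "nontrivial_binary S" "distance_degree S = \<infinity>"
    by blast
  obtain \<phi> where \<phi>: "pp_atoms \<phi> \<subseteq> snd ` \<Gamma>" "pp_fv \<phi> \<subseteq> {..<2}"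
    "S = {t. length t = 2 \<and> pp_sat \<phi> (\<lambda>i. t ! i)}" using S(1) unfolding pp_definable_def by blast
  have pres: "map e t \<in> S" if "t \<in> S" for t using pp_def_preserved[OF e \<phi> that] .
  obtain D where D: "dnf_defines 2 D S" using S(2) fo_to_dnf unfolding nontrivial_binary_def by blast
  have Dv: "dvars D \<subseteq> {..<2}" and DS: "S = {t. length t = 2 \<and> dnf_sat D (\<lambda>i. t ! i)}"
    using D unfolding dnf_defines_def dnf_bound_iff by auto
  have mem: "[x,y] \<in> S \<longleftrightarrow> dnf_sat D (\<lambda>i. [x,y] ! i)" for x y using DS by simp
  obtain M where M: "\<forall>c\<in>set D. \<forall>l\<in>set c. \<bar>fst (snd l)\<bar> \<le> M" using dnf_bound by blast
  obtain t where t: "t \<in> S" "fst (t ! 0) = fst (t ! 1)" "enat (nat M) < enat (nat \<bar>snd (t ! 1) - snd (t ! 0)\<bar>)"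
    using dd_inf[OF S(3)] by blast
  have "length t = 2" using t(1) DS by auto
  then have tt: "t = [t ! 0, t ! 1]" by (rule len2)
  have cross: "[x,y] \<in> S" if "fst x \<noteq> fst y" for x y
  proof -
    have "dnf_sat D (\<lambda>i. [t!0, t!1] ! i)" using t(1) tt mem by metis
    moreover have "\<bar>snd (t ! 1) - snd (t ! 0)\<bar> > M" using t(3) by auto
    ultimately show ?thesis using pair_equiv_far[OF Dv M t(2) _ that] mem by blast
  qed
  have "S \<noteq> {t. length t = 2}" using S(2) all_pp unfolding nontrivial_binary_def by blast
  moreover have "S \<subseteq> {t. length t = 2}" using DS by auto
  ultimately obtain u where u: "length u = 2" "u \<notin> S" by blast
  define x y where "x = u ! 0" and "y = u ! 1"
  have uxy: "u = [x,y]" using len2[OF u(1)] x_def y_def by simp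
  have fxy: "fst x = fst y" using cross u(2) uxy by blast
  define q where "q = snd y - snd x"
  define d0 where "d0 = snd (e b) - snd (e a)"
  define b' where "b' = qz_add b (q - d0)"
  have "[a, b'] \<in> S" using cross ab(1) by (simp add: b'_def)
  then have "[e a, e b'] \<in> S" using pres by fastforce
  moreover have "e b' = qz_add (e b) (q - d0)" unfolding b'_def by (rule endo_suc[OF e suc])
  ultimately have "dnf_sat D (\<lambda>i. [e a, e b'] ! i)" "fst (e a) = fst (e b')"
    "snd (e b') - snd (e a) = snd y - snd x" using mem ab(2) by (auto simp: q_def d0_def)
  then have "dnf_sat D (\<lambda>i. [x,y] ! i)" using pair_equiv_all[OF Dv _ fxy] by metis
  then show False using u(2) uxy mem by blast
qed



section \<open>DNF to FO\<close>

fun off_fo :: "nat \<Rightarrow> nat \<Rightarrow> nat \<Rightarrow> nat \<Rightarrow> fo" where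
  "off_fo a b 0 v = FEq a b"
| "off_fo a b (Suc k) v = FEx v (FConj (FSuc a v) (off_fo v b k (Suc v)))"

lemma off_fo_sat: "a < v \<Longrightarrow> b < v \<Longrightarrow> fo_sat (off_fo a b k v) s = (s b = qz_add (s a) (int k))"
proof (induction k arbitrary: a v s)
  case 0 then show ?case by auto
next
  case (Suc k)
  have "fo_sat (off_fo v b k (Suc v)) (s(v := x)) = (s b = qz_add x (int k))" for x
  proof -
    have "b < Suc v" "v < Suc v" using Suc.prems by auto
    then have "fo_sat (off_fo v b k (Suc v)) (s(v := x)) = ((s(v := x)) b = qz_add ((s(v := x)) v) (int k))"
      using Suc.IH by blast
    moreover have "(s(v := x)) b = s b" using Suc.prems by simp
    ultimately show ?thesis by simp
  qed
  then have "fo_sat (off_fo a b (Suc k) v) s = (\<exists>x. x = qz_add (s a) 1 \<and> s b = qz_add x (int k))"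
    using Suc.prems by simp
  also have "\<dots> = (s b = qz_add (s a) (int (Suc k)))" by (simp add: add.commute)
  finally show ?case .
qed

lemma off_fo_fv: "a < v \<Longrightarrow> b < v \<Longrightarrow> fo_fv (off_fo a b k v) \<subseteq> {a, b}"
proof (induction k arbitrary: a v)
  case 0 then show ?case by auto
next
  case (Suc k)
  have "fo_fv (off_fo v b k (Suc v)) \<subseteq> {v, b}" using Suc.IH[of v "Suc v"] Suc.prems by simp
  then show ?case using Suc.prems by auto
qed

fun lit_fo :: "lit \<Rightarrow> nat \<Rightarrow> fo" where
  "lit_fo (bb, p, a, b) v =
     (let f = (if p \<ge> 0 then off_fo a b (nat p) v else off_fo b a (nat (-p)) v) in
      if bb then f else FNeg f)"

lemma lit_fo_sat: "lvars l \<subseteq> {..<v} \<Longrightarrow> fo_sat (lit_fo l v) s = lit_sat l s"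
proof (cases l)
  case (fields bb p a b)
  assume h: "lvars l \<subseteq> {..<v}"
  then have ab: "a < v" "b < v" using fields by auto
  have "fo_sat (if p \<ge> 0 then off_fo a b (nat p) v else off_fo b a (nat (-p)) v) s = (s b = qz_add (s a) p)"
  proof (cases "p \<ge> 0")
    case True then show ?thesis using off_fo_sat[OF ab] by simp
  next
    case False
    then have "fo_sat (off_fo b a (nat (-p)) v) s = (s a = qz_add (s b) (-p))"
      using off_fo_sat[OF ab(2,1)] by simp
    also have "\<dots> = (s b = qz_add (s a) p)" by (metis qz_add_flip minus_minus)
    finally show ?thesis using False by simp
  qed
  then show ?thesis using fields by (simp add: Let_def lit_sat.simps)
qed

lemma lit_fo_fv: "lvars l \<subseteq> {..<v} \<Longrightarrow> fo_fv (lit_fo l v) \<subseteq> lvars l"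
proof (cases l)
  case (fields bb p a b)
  assume h: "lvars l \<subseteq> {..<v}"
  then have ab: "a < v" "b < v" using fields by auto
  show ?thesis using off_fo_fv[OF ab] off_fo_fv[OF ab(2,1)] fields by (auto simp: Let_def)
qed

definition fo_true :: fo where "fo_true = FEx 0 (FEq 0 0)"
lemma fo_true_sat[simp]: "fo_sat fo_true s" by (simp add: fo_true_def)
lemma fo_true_fv[simp]: "fo_fv fo_true = {}" by (simp add: fo_true_def)

definition conj_fo :: "lit list \<Rightarrow> nat \<Rightarrow> fo" where
  "conj_fo c v = foldr (\<lambda>l acc. FConj (lit_fo l v) acc) c fo_true"

definition disj_fo :: "fo \<Rightarrow> fo \<Rightarrow> fo" where
  "disj_fo a b = FNeg (FConj (FNeg a) (FNeg b))"

definition dnf_fo :: "dnf \<Rightarrow> nat \<Rightarrow> fo" where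
  "dnf_fo D v = foldr (\<lambda>c acc. disj_fo (conj_fo c v) acc) D (FNeg fo_true)"

lemma conj_fo_sat: "cvars c \<subseteq> {..<v} \<Longrightarrow> fo_sat (conj_fo c v) s = (\<forall>l\<in>set c. lit_sat l s)"
proof (induction c)
  case Nil then show ?case by (simp add: conj_fo_def)
next
  case (Cons l c)
  have "lvars l \<subseteq> {..<v}" "cvars c \<subseteq> {..<v}" using Cons.prems by (auto simp: cvars_def)
  then show ?case using Cons.IH lit_fo_sat by (simp add: conj_fo_def)
qed

lemma conj_fo_fv: "cvars c \<subseteq> {..<v} \<Longrightarrow> fo_fv (conj_fo c v) \<subseteq> cvars c"
proof (induction c)
  case Nil then show ?case by (simp add: conj_fo_def)
next
  case (Cons l c)
  have "lvars l \<subseteq> {..<v}" "cvars c \<subseteq> {..<v}" using Cons.prems by (auto simp: cvars_def)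
  then show ?case using Cons.IH lit_fo_fv[of l v] by (auto simp: conj_fo_def cvars_def)
qed

lemma dnf_fo_sat: "dvars D \<subseteq> {..<v} \<Longrightarrow> fo_sat (dnf_fo D v) s = dnf_sat D s"
proof (induction D)
  case Nil then show ?case by (simp add: dnf_fo_def dnf_sat_def)
next
  case (Cons c D)
  have "cvars c \<subseteq> {..<v}" "dvars D \<subseteq> {..<v}" using Cons.prems by (auto simp: dvars_def)
  then show ?case using Cons.IH conj_fo_sat by (simp add: dnf_fo_def disj_fo_def dnf_sat_Cons)
qed

lemma dnf_fo_fv: "dvars D \<subseteq> {..<v} \<Longrightarrow> fo_fv (dnf_fo D v) \<subseteq> dvars D"
proof (induction D)
  case Nil then show ?case by (simp add: dnf_fo_def)
next
  case (Cons c D)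
  have "cvars c \<subseteq> {..<v}" "dvars D \<subseteq> {..<v}" using Cons.prems by (auto simp: dvars_def)
  then show ?case using Cons.IH conj_fo_fv[of c v] by (auto simp: dnf_fo_def disj_fo_def dvars_def)
qed

lemma dnf_fo_definable:
  assumes "dvars D \<subseteq> {..<n}"
  shows "fo_definable n {t. length t = n \<and> dnf_sat D (\<lambda>i. t ! i)}"
  unfolding fo_definable_def
  using dnf_fo_sat[OF assms] dnf_fo_fv[OF assms] assms
  by (intro exI[of _ "dnf_fo D n"]) auto

section \<open>PP encodings\<close>

fun pp_off :: "nat \<Rightarrow> nat \<Rightarrow> nat \<Rightarrow> nat \<Rightarrow> pp" where
  "pp_off a b 0 v = PEq a b"
| "pp_off a b (Suc k) v = PEx v (PConj (PAtom suc_rel [a, v]) (pp_off v b k (Suc v)))"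

lemma pp_off_sat: "a < v \<Longrightarrow> b < v \<Longrightarrow> pp_sat (pp_off a b k v) s = (s b = qz_add (s a) (int k))"
proof (induction k arbitrary: a v s)
  case 0 then show ?case by auto
next
  case (Suc k)
  have "pp_sat (pp_off v b k (Suc v)) (s(v := x)) = (s b = qz_add x (int k))" for x
  proof -
    have "b < Suc v" "v < Suc v" using Suc.prems by auto
    then have "pp_sat (pp_off v b k (Suc v)) (s(v := x)) = ((s(v := x)) b = qz_add ((s(v := x)) v) (int k))"
      using Suc.IH by blast
    moreover have "(s(v := x)) b = s b" using Suc.prems by simp
    ultimately show ?thesis by simp
  qed
  then have "pp_sat (pp_off a b (Suc k) v) s = (\<exists>x. x = qz_add (s a) 1 \<and> s b = qz_add x (int k))"
    using Suc.prems by simp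
  also have "\<dots> = (s b = qz_add (s a) (int (Suc k)))" by (simp add: add.commute)
  finally show ?case .
qed

lemma pp_off_fv: "a < v \<Longrightarrow> b < v \<Longrightarrow> pp_fv (pp_off a b k v) \<subseteq> {a, b}"
proof (induction k arbitrary: a v)
  case 0 then show ?case by auto
next
  case (Suc k)
  have "pp_fv (pp_off v b k (Suc v)) \<subseteq> {v, b}" using Suc.IH[of v "Suc v"] Suc.prems by simp
  then show ?case using Suc.prems by auto
qed

lemma pp_off_atoms: "pp_atoms (pp_off a b k v) \<subseteq> {suc_rel}"
  by (induction k arbitrary: a v) auto

definition ptie :: "nat \<Rightarrow> nat \<Rightarrow> int \<Rightarrow> nat \<Rightarrow> pp" where
  "ptie a b c v = (if c \<ge> 0 then pp_off a b (nat c) v else pp_off b a (nat (-c)) v)"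

lemma ptie_sat: "a < v \<Longrightarrow> b < v \<Longrightarrow> pp_sat (ptie a b c v) s = (s b = qz_add (s a) c)"
proof (cases "c \<ge> 0")
  case True
  assume "a < v" "b < v"
  then show ?thesis using True pp_off_sat by (simp add: ptie_def)
next
  case False
  assume ab: "a < v" "b < v"
  then have "pp_sat (ptie a b c v) s = (s a = qz_add (s b) (-c))"
    using False pp_off_sat[OF ab(2,1)] by (simp add: ptie_def)
  also have "\<dots> = (s b = qz_add (s a) c)" by (metis qz_add_flip minus_minus)
  finally show ?thesis .
qed

lemma ptie_fv: "a < v \<Longrightarrow> b < v \<Longrightarrow> pp_fv (ptie a b c v) \<subseteq> {a, b}"
  using pp_off_fv[of a v b] pp_off_fv[of b v a] by (auto simp: ptie_def)

lemma ptie_atoms: "pp_atoms (ptie a b c v) \<subseteq> {suc_rel}"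
  using pp_off_atoms by (simp add: ptie_def)

definition pconj :: "pp list \<Rightarrow> pp" where "pconj ts = foldr PConj ts (PEq 0 0)"

lemma pconj_sat: "pp_sat (pconj ts) s = (\<forall>t\<in>set ts. pp_sat t s)"
  by (induction ts) (auto simp: pconj_def)

lemma pconj_fv: "pp_fv (pconj ts) \<subseteq> {0} \<union> (\<Union>t\<in>set ts. pp_fv t)"
  by (induction ts) (auto simp: pconj_def)

lemma pconj_atoms: "pp_atoms (pconj ts) = (\<Union>t\<in>set ts. pp_atoms t)"
  by (induction ts) (auto simp: pconj_def)

lemma pexs_sat: "pp_sat (foldr PEx vs \<phi>) s = (\<exists>g. pp_sat \<phi> (\<lambda>x. if x \<in> set vs then g x else s x))"
proof (induction vs arbitrary: s)
  case Nil then show ?case by simp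
next
  case (Cons v vs)
  have "pp_sat (foldr PEx (v # vs) \<phi>) s = (\<exists>x. pp_sat (foldr PEx vs \<phi>) (s(v := x)))" by simp
  also have "\<dots> = (\<exists>x g. pp_sat \<phi> (\<lambda>y. if y \<in> set vs then g y else (s(v := x)) y))"
    using Cons.IH by presburger
  also have "\<dots> = (\<exists>g. pp_sat \<phi> (\<lambda>y. if y \<in> set (v # vs) then g y else s y))"
  proof
    assume "\<exists>x g. pp_sat \<phi> (\<lambda>y. if y \<in> set vs then g y else (s(v := x)) y)"
    then obtain x g where h: "pp_sat \<phi> (\<lambda>y. if y \<in> set vs then g y else (s(v := x)) y)" by blast
    define g' where "g' = (\<lambda>y. if y \<in> set vs then g y else x)"
    have "(\<lambda>y. if y \<in> set vs then g y else (s(v := x)) y) = (\<lambda>y. if y \<in> set (v # vs) then g' y else s y)"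
      unfolding g'_def by (rule ext) simp
    then have "pp_sat \<phi> (\<lambda>y. if y \<in> set (v # vs) then g' y else s y)" using h by simp
    then show "\<exists>g. pp_sat \<phi> (\<lambda>y. if y \<in> set (v # vs) then g y else s y)" by blast
  next
    assume "\<exists>g. pp_sat \<phi> (\<lambda>y. if y \<in> set (v # vs) then g y else s y)"
    then obtain g where h: "pp_sat \<phi> (\<lambda>y. if y \<in> set (v # vs) then g y else s y)" by blast
    have "(\<lambda>y. if y \<in> set (v # vs) then g y else s y) = (\<lambda>y. if y \<in> set vs then g y else (s(v := g v)) y)"
      by (rule ext) simp
    then have "pp_sat \<phi> (\<lambda>y. if y \<in> set vs then g y else (s(v := g v)) y)" using h by simp
    then show "\<exists>x g. pp_sat \<phi> (\<lambda>y. if y \<in> set vs then g y else (s(v := x)) y)" by blast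
  qed
  finally show ?case .
qed

lemma pexs_fv: "pp_fv (foldr PEx vs \<phi>) = pp_fv \<phi> - set vs"
  by (induction vs) auto

lemma pexs_atoms: "pp_atoms (foldr PEx vs \<phi>) = pp_atoms \<phi>"
  by (induction vs) auto



definition UU :: "nat set \<Rightarrow> (nat \<Rightarrow> qz) \<Rightarrow> nat \<Rightarrow> nat \<Rightarrow> qz \<Rightarrow> qz \<Rightarrow> nat \<Rightarrow> qz" where
  "UU I w i j x y k = (if k \<in> I then qz_add x (snd (w k) - snd (w i)) else qz_add y (snd (w k) - snd (w j)))"

lemma UU_same_side:
  assumes "k \<in> I \<longleftrightarrow> m \<in> I" "fst (w k) = 0" "fst (w m) = 0"
  shows "(UU I w i j x y m = qz_add (UU I w i j x y k) q) = (w m = qz_add (w k) q)"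
  using assms by (cases "k \<in> I") (auto simp: UU_def qz_add_eq_iff)

lemma UU_cross:
  assumes "\<not> (k \<in> I \<longleftrightarrow> m \<in> I)" "fst x \<noteq> fst y"
  shows "UU I w i j x y m \<noteq> qz_add (UU I w i j x y k) q"
  using assms by (cases "k \<in> I") (auto simp: UU_def qz_add_eq_iff)

lemma UU_shift:
  assumes "w j = qz_add (w i) p"
  shows "UU I w i j x (qz_add x (p + \<Delta>)) k = qz_add x (snd (w k) - snd (w i) + (if k \<in> I then 0 else \<Delta>))"
  using assms by (auto simp: UU_def qz_add_eq_iff)

lemma UU_shift_lit:
  assumes "w j = qz_add (w i) p"
  shows "(UU I w i j x (qz_add x (p + \<Delta>)) m = qz_add (UU I w i j x (qz_add x (p + \<Delta>)) k) q) =
     (snd (w m) + (if m \<in> I then 0 else \<Delta>) = snd (w k) + (if k \<in> I then 0 else \<Delta>) + q)"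
  unfolding UU_shift[OF assms] by (auto simp: qz_add_eq_iff)

definition trl :: "nat set \<Rightarrow> (nat \<Rightarrow> qz) \<Rightarrow> nat \<Rightarrow> nat \<Rightarrow> lit \<Rightarrow> lit" where
  "trl I w i j l = (case l of (bb, q, k, m) \<Rightarrow>
     (let vk = (if k \<in> I then 0 else 1); ok = (if k \<in> I then snd (w k) - snd (w i) else snd (w k) - snd (w j));
          vm = (if m \<in> I then 0 else 1); om = (if m \<in> I then snd (w m) - snd (w i) else snd (w m) - snd (w j))
      in (bb, ok + q - om, vk, vm)))"

lemma trl_sat: "lit_sat (trl I w i j l) \<sigma> = lit_sat l (UU I w i j (\<sigma> 0) (\<sigma> 1))"
  by (cases l) (auto simp: trl_def UU_def lit_sat.simps Let_def qz_add_eq_iff)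

lemma trl_vars: "lvars (trl I w i j l) \<subseteq> {..<2}"
  by (cases l) (auto simp: trl_def Let_def)

lemma mem_R_iff:
  assumes "dnf_defines n D R"
  shows "map f [0..<n] \<in> R \<longleftrightarrow> dnf_sat D f"
proof -
  have Dv: "dvars D \<subseteq> {..<n}" and R: "R = {t. length t = n \<and> dnf_sat D (\<lambda>i. t ! i)}"
    using assms unfolding dnf_defines_def dnf_bound_iff by auto
  have "dnf_sat D (\<lambda>i. map f [0..<n] ! i) = dnf_sat D f"
    using Dv by (intro dnf_sat_cong) auto
  then show ?thesis using R by simp
qed

definition phiS :: "qz list set \<Rightarrow> nat \<Rightarrow> nat set \<Rightarrow> (nat \<Rightarrow> int) \<Rightarrow> (nat \<Rightarrow> int) \<Rightarrow> pp" where
  "phiS R n I a b = foldr PEx [2..<n+2]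
     (PConj (PAtom R (map (\<lambda>k. k + 2) [0..<n]))
       (pconj (map (\<lambda>k. if k \<in> I then ptie 0 (k + 2) (a k) (n + 2) else ptie 1 (k + 2) (b k) (n + 2)) [0..<n])))"

lemma phiS_sat:
  "pp_sat (phiS R n I a b) \<sigma> \<longleftrightarrow>
     map (\<lambda>k. if k \<in> I then qz_add (\<sigma> 0) (a k) else qz_add (\<sigma> 1) (b k)) [0..<n] \<in> R"
  (is "_ \<longleftrightarrow> ?Z \<in> R")
proof -
  let ?tie = "\<lambda>k. if k \<in> I then ptie 0 (k + 2) (a k) (n + 2) else ptie 1 (k + 2) (b k) (n + 2)"
  let ?body = "PConj (PAtom R (map (\<lambda>k. k + 2) [0..<n])) (pconj (map ?tie [0..<n]))"
  have body: "pp_sat ?body \<sigma>' \<longleftrightarrow> map \<sigma>' (map (\<lambda>k. k + 2) [0..<n]) \<in> R \<and>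
      (\<forall>k<n. \<sigma>' (k + 2) = (if k \<in> I then qz_add (\<sigma>' 0) (a k) else qz_add (\<sigma>' 1) (b k)))" for \<sigma>'
  proof -
    have "pp_sat (?tie k) \<sigma>' = (\<sigma>' (k + 2) = (if k \<in> I then qz_add (\<sigma>' 0) (a k) else qz_add (\<sigma>' 1) (b k)))"
      if "k < n" for k using that ptie_sat[of 0 "n+2" "k+2"] ptie_sat[of 1 "n+2" "k+2"] by auto
    note tie = this
    have calc: "(\<forall>t\<in>set (map ?tie [0..<n]). pp_sat t \<sigma>') =
      (\<forall>k<n. \<sigma>' (k + 2) = (if k \<in> I then qz_add (\<sigma>' 0) (a k) else qz_add (\<sigma>' 1) (b k)))"
    proof
      assume h: "\<forall>t\<in>set (map ?tie [0..<n]). pp_sat t \<sigma>'"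
      show "\<forall>k<n. \<sigma>' (k + 2) = (if k \<in> I then qz_add (\<sigma>' 0) (a k) else qz_add (\<sigma>' 1) (b k))"
      proof (intro allI impI)
        fix k assume k: "k < n"
        then have "?tie k \<in> set (map ?tie [0..<n])" by simp
        then have "pp_sat (?tie k) \<sigma>'" using h by blast
        then show "\<sigma>' (k + 2) = (if k \<in> I then qz_add (\<sigma>' 0) (a k) else qz_add (\<sigma>' 1) (b k))"
          by (rule iffD1[OF tie[OF k]])
      qed
    next
      assume h: "\<forall>k<n. \<sigma>' (k + 2) = (if k \<in> I then qz_add (\<sigma>' 0) (a k) else qz_add (\<sigma>' 1) (b k))"
      show "\<forall>t\<in>set (map ?tie [0..<n]). pp_sat t \<sigma>'"
      proof
        fix t assume "t \<in> set (map ?tie [0..<n])"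
        then obtain k where k: "k < n" "t = ?tie k" by auto
        have "\<sigma>' (k + 2) = (if k \<in> I then qz_add (\<sigma>' 0) (a k) else qz_add (\<sigma>' 1) (b k))"
          using h k(1) by blast
        then show "pp_sat t \<sigma>'" unfolding k(2) by (rule iffD2[OF tie[OF k(1)]])
      qed
    qed
    show ?thesis by (simp only: pp_sat.simps pconj_sat calc)
  qed
  show ?thesis
  proof
    assume "pp_sat (phiS R n I a b) \<sigma>"
    then have "\<exists>g. pp_sat ?body (\<lambda>x. if x \<in> set [2..<n+2] then g x else \<sigma> x)"
      by (simp only: phiS_def pexs_sat)
    then obtain g where g: "pp_sat ?body (\<lambda>x. if x \<in> set [2..<n+2] then g x else \<sigma> x)"
      by (elim exE)
    define s where "s = (\<lambda>x. if x \<in> set [2..<n+2] then g x else \<sigma> x)"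
    have g': "pp_sat ?body s" using g unfolding s_def .
    have s01: "s 0 = \<sigma> 0" "s 1 = \<sigma> 1" by (auto simp: s_def)
    have h: "map s (map (\<lambda>k. k + 2) [0..<n]) \<in> R"
      "\<forall>k<n. s (k + 2) = (if k \<in> I then qz_add (s 0) (a k) else qz_add (s 1) (b k))"
      using iffD1[OF body g'] by (rule conjunct1, rule conjunct2)
    have "map s (map (\<lambda>k. k + 2) [0..<n]) = ?Z"
      using h(2) s01 by (intro nth_equalityI) auto
    then show "?Z \<in> R" using h(1) by metis
  next
    assume Z: "?Z \<in> R"
    define g where "g = (\<lambda>x. ?Z ! (x - 2))"
    define s where "s = (\<lambda>x. if x \<in> set [2..<n+2] then g x else \<sigma> x)"
    have s01: "s 0 = \<sigma> 0" "s 1 = \<sigma> 1" by (auto simp: s_def)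
    have sk: "s (k + 2) = (if k \<in> I then qz_add (\<sigma> 0) (a k) else qz_add (\<sigma> 1) (b k))" if "k < n" for k
    proof -
      have "k + 2 \<in> set [2..<n+2]" using that by (simp only: set_upt atLeastLessThan_iff) linarith
      then have "s (k + 2) = ?Z ! k" by (simp add: s_def g_def)
      then show ?thesis using that by simp
    qed
    have mz: "map s (map (\<lambda>k. k + 2) [0..<n]) = ?Z"
      using sk by (intro nth_equalityI) auto
    have "pp_sat ?body s"
    proof (rule iffD2[OF body], intro conjI)
      show "map s (map (\<lambda>k. k + 2) [0..<n]) \<in> R" using mz Z by metis
      show "\<forall>k<n. s (k + 2) = (if k \<in> I then qz_add (s 0) (a k) else qz_add (s 1) (b k))"
      proof (intro allI impI)
        fix k assume "k < n"
        show "s (k + 2) = (if k \<in> I then qz_add (s 0) (a k) else qz_add (s 1) (b k))"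
          unfolding s01 by (rule sk[OF \<open>k < n\<close>])
      qed
    qed
    then have "\<exists>g. pp_sat ?body (\<lambda>x. if x \<in> set [2..<n+2] then g x else \<sigma> x)" unfolding s_def by (rule exI[where x=g])
    then show "pp_sat (phiS R n I a b) \<sigma>" by (simp only: phiS_def pexs_sat)
  qed
qed

lemma phiS_fv: "pp_fv (phiS R n I a b) \<subseteq> {..<2}"
proof -
  let ?tie = "\<lambda>k. if k \<in> I then ptie 0 (k + 2) (a k) (n + 2) else ptie 1 (k + 2) (b k) (n + 2)"
  have "pp_fv (?tie k) \<subseteq> {0, 1, k + 2}" if "k < n" for k
    using that ptie_fv[of 0 "n+2" "k+2"] ptie_fv[of 1 "n+2" "k+2"] by auto
  then have "pp_fv (pconj (map ?tie [0..<n])) \<subseteq> {0, 1} \<union> set [2..<n+2]"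
    using pconj_fv[of "map ?tie [0..<n]"] by fastforce
  moreover have "set (map (\<lambda>k. k + 2) [0..<n]) \<subseteq> set [2..<n+2]" by auto
  ultimately show ?thesis unfolding phiS_def pexs_fv by auto
qed

lemma phiS_atoms: "pp_atoms (phiS R n I a b) \<subseteq> {R, suc_rel}"
proof -
  let ?tie = "\<lambda>k. if k \<in> I then ptie 0 (k + 2) (a k) (n + 2) else ptie 1 (k + 2) (b k) (n + 2)"
  have A: "pp_atoms (?tie k) \<subseteq> {suc_rel}" for k
    using ptie_atoms by auto
  have "pp_atoms (pconj (map ?tie [0..<n])) \<subseteq> {suc_rel}"
    unfolding pconj_atoms UN_subset_iff set_map using A by blast
  then show ?thesis unfolding phiS_def pexs_atoms pp_atoms.simps by blast
qed

lemma e0_endo: "endomorphism {(2, suc_rel)} e0"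
proof -
  have "map e0 t \<in> suc_rel" if t: "t \<in> suc_rel" for t
  proof -
    obtain x where "t = [x, qz_add x 1]" using t unfolding suc_rel_def by blast
    then show ?thesis by simp
  qed
  then show ?thesis unfolding endomorphism_def by blast
qed

lemma construct:
  assumes suc: "(2, suc_rel) \<in> \<Gamma>" and R\<Gamma>: "(n, R) \<in> \<Gamma>"
    and DR: "dnf_defines n D R"
    and C: "C \<in> set D"
    and w0: "\<forall>k. fst (w k) = 0" and wij: "w j = qz_add (w i) p" and wD: "\<not> dnf_sat D w"
    and I: "i \<in> I" "j \<notin> I"
    and W1: "\<forall>l\<in>set C. (fst (snd (snd l)) \<in> I \<longleftrightarrow> snd (snd (snd l)) \<in> I) \<longrightarrow> lit_sat l w"
    and W2: "\<forall>l\<in>set C. \<not> (fst (snd (snd l)) \<in> I \<longleftrightarrow> snd (snd (snd l)) \<in> I) \<longrightarrow> \<not> fst l"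
  shows "\<exists>S. pp_definable (snd ` \<Gamma>) 2 S \<and> nontrivial_binary S \<and> distance_degree S = \<infinity>"
proof -
  let ?U = "UU I w i j"
  define S where "S = {t. length t = 2 \<and> dnf_sat D (?U (t ! 0) (t ! 1))}"
  have Dv: "dvars D \<subseteq> {..<n}" using DR unfolding dnf_defines_def dnf_bound_iff by auto
  have memS: "[x, y] \<in> S \<longleftrightarrow> dnf_sat D (?U x y)" for x y by (simp add: S_def)
  define a where "a = (\<lambda>k. snd (w k) - snd (w i))"
  define b where "b = (\<lambda>k. snd (w k) - snd (w j))"
  have "S = {t. length t = 2 \<and> pp_sat (phiS R n I a b) (\<lambda>i. t ! i)}"
  proof -
    have fe: "(\<lambda>k. if k \<in> I then qz_add x (a k) else qz_add y (b k)) = ?U x y" for x y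
      by (simp add: fun_eq_iff UU_def a_def b_def)
    show ?thesis by (simp only: S_def phiS_sat fe mem_R_iff[OF DR])
  qed
  moreover have "R \<in> snd ` \<Gamma>" using R\<Gamma> by (metis image_eqI snd_conv)
  moreover have "suc_rel \<in> snd ` \<Gamma>" using suc by (metis image_eqI snd_conv)
  ultimately have ppS: "pp_definable (snd ` \<Gamma>) 2 S"
    unfolding pp_definable_def using phiS_fv[of R n I a b] phiS_atoms[of R n I a b] by blast
  define D2 where "D2 = map (map (trl I w i j)) D"
  have "dnf_sat D2 \<sigma> = dnf_sat D (?U (\<sigma> 0) (\<sigma> 1))" for \<sigma>
    unfolding D2_def dnf_sat_def by (simp add: trl_sat)
  then have SD2: "S = {t. length t = 2 \<and> dnf_sat D2 (\<lambda>i. t ! i)}" unfolding S_def by simp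
  have "dvars D2 \<subseteq> {..<2}"
  proof
    fix x assume "x \<in> dvars D2"
    then obtain c l where "c \<in> set D" "l \<in> set c" "x \<in> lvars (trl I w i j l)"
      unfolding D2_def dvars_def cvars_def by auto
    then show "x \<in> {..<2}" using trl_vars by blast
  qed
  then have foS: "fo_definable 2 S" using dnf_fo_definable SD2 by simp
  have litC: "lit_sat l (?U x y)" if "l \<in> set C" "fst x \<noteq> fst y" for l x y
  proof -
    obtain bb q k m where l: "l = (bb, q, k, m)" by (cases l)
    show ?thesis
    proof (cases "k \<in> I \<longleftrightarrow> m \<in> I")
      case True
      then have "lit_sat l w" using W1 that l by auto
      then show ?thesis using UU_same_side[OF True, of w i j x y q] w0 l by (simp add: lit_sat.simps)
    next
      case False
      then have "\<not> bb" using W2 that l by auto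
      then show ?thesis using UU_cross[OF False that(2), of w i j q] l by (simp add: lit_sat.simps)
    qed
  qed
  have cross: "[x, y] \<in> S" if "fst x \<noteq> fst y" for x y
    using litC[OF _ that] C unfolding memS dnf_sat_def by blast
  have notp: "[x, qz_add x p] \<notin> S" for x
  proof -
    have "dnf_sat D (?U x (qz_add x (p + 0))) = dnf_sat D w"
    proof (rule dnf_sat_equiv[where V=UNIV and P="\<lambda>_. True"])
      fix k m q
      show "(?U x (qz_add x (p + 0)) m = qz_add (?U x (qz_add x (p + 0)) k) q) = (w m = qz_add (w k) q)"
        unfolding UU_shift_lit[OF wij] using w0 by (auto simp: qz_add_eq_iff)
    qed auto
    then show ?thesis using wD memS by simp
  qed
  define B where "B = (\<lambda>l. snd (w (fst (snd (snd l)))) + fst (snd l) - snd (w (snd (snd (snd l))))) ` set C \<union>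
                      (\<lambda>l. snd (w (snd (snd (snd l)))) - snd (w (fst (snd (snd l)))) - fst (snd l)) ` set C"
  have finB: "finite B" unfolding B_def by simp
  have shift: "[x, qz_add x (p + \<Delta>)] \<in> S" if "\<Delta> \<notin> B" for x \<Delta>
  proof -
    have "lit_sat l (?U x (qz_add x (p + \<Delta>)))" if l: "l \<in> set C" for l
    proof -
      obtain bb q k m where lq: "l = (bb, q, k, m)" by (cases l)
      show ?thesis
      proof (cases "k \<in> I \<longleftrightarrow> m \<in> I")
        case True
        then have "lit_sat l w" using W1 l lq by auto
        moreover have "(?U x (qz_add x (p + \<Delta>)) m = qz_add (?U x (qz_add x (p + \<Delta>)) k) q) = (w m = qz_add (w k) q)"
          unfolding UU_shift_lit[OF wij] using w0 True by (auto simp: qz_add_eq_iff)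
        ultimately show ?thesis using lq by (simp add: lit_sat.simps)
      next
        case False
        then have "\<not> bb" using W2 l lq by auto
        have "\<Delta> \<noteq> snd (w k) + q - snd (w m)" "\<Delta> \<noteq> snd (w m) - snd (w k) - q"
          using \<open>\<Delta> \<notin> B\<close> l lq unfolding B_def by force+
        then have "\<not> (snd (w m) + (if m \<in> I then 0 else \<Delta>) = snd (w k) + (if k \<in> I then 0 else \<Delta>) + q)"
          using False by auto
        then show ?thesis using \<open>\<not> bb\<close> lq UU_shift_lit[OF wij] by (simp add: lit_sat.simps)
      qed
    qed
    then show ?thesis using C memS unfolding dnf_sat_def by blast
  qed
  have notpp: "\<not> pp_definable {suc_rel} 2 S"
  proof
    assume "pp_definable {suc_rel} 2 S"
    then obtain \<phi> where \<phi>: "pp_atoms \<phi> \<subseteq> {suc_rel}" "pp_fv \<phi> \<subseteq> {..<2}"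
      "S = {t. length t = 2 \<and> pp_sat \<phi> (\<lambda>i. t ! i)}" unfolding pp_definable_def by blast
    have "pp_atoms \<phi> \<subseteq> snd ` {(2::nat, suc_rel)}" using \<phi>(1) by simp
    have "[((0::rat), (0::int)), (1, p)] \<in> S" using cross by simp
    then have "map e0 [((0::rat), (0::int)), (1, p)] \<in> S"
      using pp_def_preserved[OF e0_endo \<open>pp_atoms \<phi> \<subseteq> snd ` {(2::nat, suc_rel)}\<close> \<phi>(2,3)] by blast
    moreover have "map e0 [((0::rat), (0::int)), (1, p)] = [(0, 0), qz_add (0, 0) p]"
      by (simp add: e0_def qz_add_def)
    ultimately show False using notp by simp
  qed
  have dd: "distance_degree S = \<infinity>"
  proof -
    have "\<exists>t\<in>{t \<in> S. fst (t ! 0) = fst (t ! 1)}. x < enat (nat \<bar>snd (t ! 1) - snd (t ! 0)\<bar>)"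
      if xt: "x < top" for x
    proof -
      obtain N where N: "x = enat N" using xt by (cases x) (auto simp: top_enat_def)
      define \<Delta> where "\<Delta> = Max (insert 0 (abs ` B)) + int N + \<bar>p\<bar> + 1"
      have "\<forall>d\<in>B. \<bar>d\<bar> \<le> Max (insert 0 (abs ` B))" using finB by simp
      then have "\<Delta> \<notin> B" unfolding \<Delta>_def by force
      then have mem: "[(0, 0), qz_add (0, 0) (p + \<Delta>)] \<in> S" using shift by blast
      have "int N < \<bar>p + \<Delta>\<bar>"
      proof -
        have "0 \<le> Max (insert 0 (abs ` B))" using finB by simp
        then show ?thesis unfolding \<Delta>_def by linarith
      qed
      then have "N < nat \<bar>snd (qz_add (0, 0) (p + \<Delta>)) - snd ((0::rat, 0::int))\<bar>" by simp
      then show ?thesis using mem N by (intro bexI[of _ "[(0, 0), qz_add (0, 0) (p + \<Delta>)]"]) auto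
    qed
    then have "(SUP t \<in> {t \<in> S. fst (t ! 0) = fst (t ! 1)}. enat (nat \<bar>snd (t ! 1) - snd (t ! 0)\<bar>)) = top"
      by (simp only: SUP_eq_top_iff) blast
    then show ?thesis unfolding distance_degree_def by (simp add: top_enat_def)
  qed
  show ?thesis using ppS foS notpp dd unfolding nontrivial_binary_def by blast
qed



lemma set_remove_insert: "k < length xs \<Longrightarrow> set xs \<subseteq> insert (xs ! k) (set (take k xs @ drop (Suc k) xs))"
proof -
  assume k: "k < length xs"
  have "xs = take k xs @ xs ! k # drop (Suc k) xs" using k by (simp add: id_take_nth_drop)
  then have "set xs = insert (xs ! k) (set (take k xs @ drop (Suc k) xs))"
    by (metis Un_insert_right list.simps(15) set_append)
  then show ?thesis by simp
qed

lemma update_weaker: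
  assumes "ci < length D" "set C' \<subseteq> set (D ! ci)" "dnf_sat D s"
  shows "dnf_sat (D[ci := C']) s"
proof -
  obtain c where c: "c \<in> set D" "\<forall>l\<in>set c. lit_sat l s" using assms(3) unfolding dnf_sat_def by blast
  obtain k where k: "k < length D" "D ! k = c" using c(1) by (auto simp: in_set_conv_nth)
  show ?thesis
  proof (cases "k = ci")
    case True
    have "C' \<in> set (D[ci := C'])" using assms(1) by (simp add: set_update_memI)
    moreover have "\<forall>l\<in>set C'. lit_sat l s" using assms(2) c(2) k True by blast
    ultimately show ?thesis unfolding dnf_sat_def by blast
  next
    case False
    have "D[ci := C'] ! k = c" using False k by simp
    then have "c \<in> set (D[ci := C'])" using k(1) by (metis length_list_update nth_mem)
    then show ?thesis using c(2) unfolding dnf_sat_def by blast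
  qed
qed

lemma update_sat_imp:
  assumes "dnf_sat (D[ci := C']) s" "\<not> dnf_sat D s"
  shows "\<forall>l\<in>set C'. lit_sat l s"
proof -
  obtain c where c: "c \<in> set (D[ci := C'])" "\<forall>l\<in>set c. lit_sat l s" using assms(1) unfolding dnf_sat_def by blast
  have "c \<in> insert C' (set D)" using set_update_subset_insert[of D ci C'] c(1) by (rule subsetD)
  moreover have "c \<notin> set D" using c(2) assms(2) unfolding dnf_sat_def by blast
  ultimately have "c = C'" by simp
  then show ?thesis using c(2) by simp
qed

lemma remove_sat: "dnf_sat (take ci D @ drop (Suc ci) D) s \<Longrightarrow> dnf_sat D s"
  using set_remove_nth[of ci D] unfolding dnf_sat_def by blast

lemma remove_notsat:
  assumes "ci < length D" "dnf_sat D t" "\<not> dnf_sat (take ci D @ drop (Suc ci) D) t"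
  shows "\<forall>l\<in>set (D ! ci). lit_sat l t"
proof -
  obtain c where c: "c \<in> set D" "\<forall>l\<in>set c. lit_sat l t" using assms(2) unfolding dnf_sat_def by blast
  have "c \<in> insert (D ! ci) (set (take ci D @ drop (Suc ci) D))" using set_remove_insert[OF assms(1)] c(1) by (rule subsetD)
  moreover have "c \<notin> set (take ci D @ drop (Suc ci) D)" using c(2) assms(3) unfolding dnf_sat_def by blast
  ultimately have "c = D ! ci" by simp
  then show ?thesis using c(2) by simp
qed

lemma offset:
  assumes "(a, k) \<in> E\<^sup>*" "E = {(k, m). \<exists>q. (True, q, k, m) \<in> set C' \<or> (True, q, m, k) \<in> set C'}"
  shows "\<exists>c. \<forall>u. (\<forall>l\<in>set C'. lit_sat l u) \<longrightarrow> u k = qz_add (u a) c"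
  using assms(1)
proof (induction rule: rtrancl_induct)
  case base
  show ?case by (intro exI[of _ 0]) simp
next
  case (step y z)
  obtain c where c: "\<forall>u. (\<forall>l\<in>set C'. lit_sat l u) \<longrightarrow> u y = qz_add (u a) c" using step.IH by blast
  obtain q where q: "(True, q, y, z) \<in> set C' \<or> (True, q, z, y) \<in> set C'" using step.hyps(2) assms(2) by blast
  show ?case
  proof (cases "(True, q, y, z) \<in> set C'")
    case True
    have "u z = qz_add (u a) (c + q)" if "\<forall>l\<in>set C'. lit_sat l u" for u
    proof -
      have "u z = qz_add (u y) q" using that True by (force simp: lit_sat.simps)
      moreover have "u y = qz_add (u a) c" using c that by blast
      ultimately show ?thesis by simp
    qed
    then show ?thesis by blast
  next
    case False
    then have F: "(True, q, z, y) \<in> set C'" using q by blast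
    have "u z = qz_add (u a) (c - q)" if "\<forall>l\<in>set C'. lit_sat l u" for u
    proof -
      have "u y = qz_add (u z) q" using that F by (force simp: lit_sat.simps)
      then have "u z = qz_add (u y) (- q)" by (metis qz_add_flip)
      moreover have "u y = qz_add (u a) c" using c that by blast
      ultimately show ?thesis by simp
    qed
    then show ?thesis by blast
  qed
qed

lemma normalize:
  fixes s :: "nat \<Rightarrow> qz" and M :: int
  shows "\<exists>w. (\<forall>k. fst (w k) = 0) \<and>
    (\<forall>k m q. k < n \<longrightarrow> m < n \<longrightarrow> \<bar>q\<bar> \<le> M \<longrightarrow> (s m = qz_add (s k) q \<longleftrightarrow> w m = qz_add (w k) q))"
proof -
  define F where "F = fst ` s ` {..<n}"
  have "finite F" unfolding F_def by simp
  then obtain f :: "rat \<Rightarrow> nat" where f: "inj_on f F" using finite_imp_inj_to_nat_seg by blast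
  define A where "A = Max (insert 0 ((\<lambda>k. \<bar>snd (s k)\<bar>) ` {..<n}))"
  have Ak: "\<bar>snd (s k)\<bar> \<le> A" if "k < n" for k
    unfolding A_def using that by (intro Max_ge) auto
  have A0: "0 \<le> A" unfolding A_def by (intro Max_ge) auto
  define K where "K = 2 * A + \<bar>M\<bar> + 1"
  define w where "w = (\<lambda>k. ((0::rat), snd (s k) + K * int (f (fst (s k)))))"
  have "(s m = qz_add (s k) q \<longleftrightarrow> w m = qz_add (w k) q)" if km: "k < n" "m < n" "\<bar>q\<bar> \<le> M" for k m q
  proof (cases "fst (s m) = fst (s k)")
    case True
    then have fe: "f (fst (s m)) = f (fst (s k))" by simp
    have "w m = qz_add (w k) q \<longleftrightarrow> snd (s m) + K * int (f (fst (s k))) = snd (s k) + K * int (f (fst (s k))) + q"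
      unfolding w_def qz_add_eq_iff fe by simp
    also have "\<dots> \<longleftrightarrow> snd (s m) = snd (s k) + q" by arith
    also have "\<dots> \<longleftrightarrow> s m = qz_add (s k) q" using True by (simp add: qz_add_eq_iff)
    finally show ?thesis by simp
  next
    case False
    have L: "\<not> s m = qz_add (s k) q" using False by (simp add: qz_add_eq_iff)
    have "fst (s m) \<in> F" "fst (s k) \<in> F" using km unfolding F_def by auto
    then have fd: "f (fst (s m)) \<noteq> f (fst (s k))" using f False by (meson inj_on_eq_iff)
    define d where "d = int (f (fst (s m))) - int (f (fst (s k)))"
    have d1: "1 \<le> \<bar>d\<bar>" using fd unfolding d_def by linarith
    have K0: "0 \<le> K" unfolding K_def using A0 by linarith
    have "K * 1 \<le> K * \<bar>d\<bar>" using d1 K0 by (intro mult_left_mono) auto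
    then have Kd: "K \<le> \<bar>K * d\<bar>" using K0 by (simp add: abs_mult)
    have "\<not> w m = qz_add (w k) q"
    proof
      assume "w m = qz_add (w k) q"
      then have "snd (s m) + K * int (f (fst (s m))) = snd (s k) + K * int (f (fst (s k))) + q"
        unfolding w_def qz_add_eq_iff by simp
      moreover have "K * d = K * int (f (fst (s m))) - K * int (f (fst (s k)))"
        unfolding d_def by (rule right_diff_distrib)
      ultimately have "K * d = snd (s k) - snd (s m) + q" by linarith
      then have "\<bar>K * d\<bar> \<le> 2 * A + \<bar>M\<bar>" using Ak[OF km(1)] Ak[OF km(2)] km(3) by linarith
      then show False using Kd unfolding K_def by linarith
    qed
    then show ?thesis using L by simp
  qed
  moreover have "\<forall>k. fst (w k) = 0" by (simp add: w_def)
  ultimately show ?thesis by blast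
qed



lemma notP1:
  assumes suc: "(2, suc_rel) \<in> \<Gamma>" and R\<Gamma>: "(n, R) \<in> \<Gamma>"
    and DR: "dnf_defines n D R" and red: "reduced_dnf D" and np: "\<not> positive_dnf D"
  shows "\<exists>S. pp_definable (snd ` \<Gamma>) 2 S \<and> nontrivial_binary S \<and> distance_degree S = \<infinity>"
proof -
  have Dv: "dvars D \<subseteq> {..<n}" using DR unfolding dnf_defines_def dnf_bound_iff by auto
  obtain c l where cl: "c \<in> set D" "l \<in> set c" "\<not> fst l" using np unfolding positive_dnf_def by blast
  obtain ci where ci: "ci < length D" "D ! ci = c" using cl(1) by (auto simp: in_set_conv_nth)
  obtain lj where lj: "lj < length c" "c ! lj = l" using cl(2) by (auto simp: in_set_conv_nth)
  obtain p i j where l: "l = (False, p, i, j)" using cl(3) by (cases l) auto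
  define C' where "C' = take lj c @ drop (Suc lj) c"
  have setC: "set c \<subseteq> insert l (set C')" using set_remove_insert[OF lj(1)] lj(2) unfolding C'_def by simp
  have setC': "set C' \<subseteq> set c" unfolding C'_def by (rule set_remove_nth)
  have "\<not> dnf_equiv D (D[ci := C'])" using red ci lj unfolding reduced_dnf_def C'_def by blast
  then obtain s where s: "dnf_sat D s \<noteq> dnf_sat (D[ci := C']) s" unfolding dnf_equiv_def by blast
  have sD: "\<not> dnf_sat D s" and sD': "dnf_sat (D[ci := C']) s"
    using s update_weaker[OF ci(1), of C' s] setC' ci(2) by auto
  have sC': "\<forall>l\<in>set C'. lit_sat l s" using update_sat_imp[OF sD' sD] .
  have "\<not> (\<forall>l\<in>set c. lit_sat l s)" using sD cl(1) unfolding dnf_sat_def by blast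
  then have "\<not> lit_sat l s" using sC' setC by blast
  then have sij: "s j = qz_add (s i) p" using l by (simp add: lit_sat.simps)
  have "\<not> dnf_equiv D (take ci D @ drop (Suc ci) D)" using red ci unfolding reduced_dnf_def by blast
  then obtain t where t: "dnf_sat D t \<noteq> dnf_sat (take ci D @ drop (Suc ci) D) t" unfolding dnf_equiv_def by blast
  have "dnf_sat D t" "\<not> dnf_sat (take ci D @ drop (Suc ci) D) t" using t remove_sat by blast+
  then have tc: "\<forall>l\<in>set c. lit_sat l t" using remove_notsat[OF ci(1)] ci(2) by blast
  have tC': "\<forall>l\<in>set C'. lit_sat l t" using tc setC' by blast
  have "lit_sat l t" using tc cl(2) by blast
  then have tij: "t j \<noteq> qz_add (t i) p" using l by (simp add: lit_sat.simps)
  define E where "E = {(k, m). \<exists>q. (True, q, k, m) \<in> set C' \<or> (True, q, m, k) \<in> set C'}"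
  define I where "I = {k. (i, k) \<in> E\<^sup>*}"
  have iI: "i \<in> I" unfolding I_def by simp
  have jI: "j \<notin> I"
  proof
    assume "j \<in> I"
    then obtain cc where cc: "\<forall>u. (\<forall>l\<in>set C'. lit_sat l u) \<longrightarrow> u j = qz_add (u i) cc"
      using offset[of i j E C'] E_def unfolding I_def by blast
    have "s j = qz_add (s i) cc" using cc sC' by blast
    then have "cc = p" using sij by simp
    moreover have "t j = qz_add (t i) cc" using cc tC' by blast
    ultimately show False using tij by simp
  qed
  have clos: "k \<in> I \<longleftrightarrow> m \<in> I" if "(True, q, k, m) \<in> set C'" for q k m
  proof -
    have "(k, m) \<in> E" "(m, k) \<in> E" using that unfolding E_def by blast+
    then show ?thesis unfolding I_def by (meson mem_Collect_eq rtrancl.rtrancl_into_rtrancl)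
  qed
  obtain M where M: "\<forall>c\<in>set D. \<forall>l\<in>set c. \<bar>fst (snd l)\<bar> \<le> M" using dnf_bound by blast
  obtain w where w0: "\<forall>k. fst (w k) = 0"
    and weq: "\<forall>k m q. k < n \<longrightarrow> m < n \<longrightarrow> \<bar>q\<bar> \<le> M \<longrightarrow> (s m = qz_add (s k) q \<longleftrightarrow> w m = qz_add (w k) q)"
    using normalize[where n=n and s=s and M=M] by blast
  have litD: "lit_sat l' w = lit_sat l' s" if "c' \<in> set D" "l' \<in> set c'" for c' l'
  proof -
    obtain bb q k m where l': "l' = (bb, q, k, m)" by (cases l')
    have "{k, m} \<subseteq> dvars D" using that l' unfolding dvars_def cvars_def by force
    then have "k < n" "m < n" using Dv by auto
    moreover have "\<bar>q\<bar> \<le> M" using M that l' by force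
    ultimately have "(s m = qz_add (s k) q) = (w m = qz_add (w k) q)" using weq by blast
    then show ?thesis using l' by (simp add: lit_sat.simps)
  qed
  have wD: "\<not> dnf_sat D w"
  proof -
    have "dnf_sat D w = dnf_sat D s" unfolding dnf_sat_def using litD by (intro bex_cong ball_cong refl) blast
    then show ?thesis using sD by simp
  qed
  have "lit_sat l w = lit_sat l s" using litD cl(1,2) by blast
  then have wij: "w j = qz_add (w i) p" using \<open>\<not> lit_sat l s\<close> l by (simp add: lit_sat.simps)
  have W1: "\<forall>l'\<in>set c. (fst (snd (snd l')) \<in> I \<longleftrightarrow> snd (snd (snd l')) \<in> I) \<longrightarrow> lit_sat l' w"
  proof (intro ballI impI)
    fix l' assume l': "l' \<in> set c" "fst (snd (snd l')) \<in> I \<longleftrightarrow> snd (snd (snd l')) \<in> I"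
    have "l' \<noteq> l" using l'(2) l iI jI by auto
    then have "l' \<in> set C'" using l'(1) setC by blast
    then have "lit_sat l' s" using sC' by blast
    then show "lit_sat l' w" using litD cl(1) l'(1) by blast
  qed
  have W2: "\<forall>l'\<in>set c. \<not> (fst (snd (snd l')) \<in> I \<longleftrightarrow> snd (snd (snd l')) \<in> I) \<longrightarrow> \<not> fst l'"
  proof (intro ballI impI notI)
    fix l' assume l': "l' \<in> set c" "\<not> (fst (snd (snd l')) \<in> I \<longleftrightarrow> snd (snd (snd l')) \<in> I)" "fst l'"
    have "l' \<noteq> l" using l'(3) cl(3) by blast
    then have "l' \<in> set C'" using l'(1) setC by blast
    obtain bb q k m where lq: "l' = (bb, q, k, m)" by (cases l')
    then have "(True, q, k, m) \<in> set C'" using \<open>l' \<in> set C'\<close> l'(3) by simp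
    then have "k \<in> I \<longleftrightarrow> m \<in> I" by (rule clos)
    then show False using l'(2) lq by simp
  qed
  show ?thesis by (rule construct[OF suc R\<Gamma> DR cl(1) w0 wij wD iI jI W1 W2])
qed

theorem mainTheorem16:
  fixes \<Gamma> :: qz_structure
  assumes "wf_structure \<Gamma>"
    and "fo_definable_structure \<Gamma>"
    and "(2, suc_rel) \<in> \<Gamma>"
  shows "((\<forall>(n, R) \<in> \<Gamma>. \<forall>D. dnf_defines n D R \<and> reduced_dnf D \<longrightarrow> positive_dnf D)
           \<longleftrightarrow> (\<exists>e a b. endomorphism \<Gamma> e \<and> fst a \<noteq> fst b \<and> fst (e a) = fst (e b)))
       \<and> ((\<exists>e a b. endomorphism \<Gamma> e \<and> fst a \<noteq> fst b \<and> fst (e a) = fst (e b))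
           \<longleftrightarrow> \<not> (\<exists>S. pp_definable (snd ` \<Gamma>) 2 S \<and> nontrivial_binary S
                      \<and> distance_degree S = \<infinity>))"
proof -
  let ?P1 = "\<forall>(n, R) \<in> \<Gamma>. \<forall>D. dnf_defines n D R \<and> reduced_dnf D \<longrightarrow> positive_dnf D"
  let ?P2 = "\<exists>e a b. endomorphism \<Gamma> e \<and> fst a \<noteq> fst b \<and> fst (e a) = fst (e b)"
  let ?P3 = "\<not> (\<exists>S. pp_definable (snd ` \<Gamma>) 2 S \<and> nontrivial_binary S \<and> distance_degree S = \<infinity>)"
  have 12: "?P1 \<Longrightarrow> ?P2" using P1_P2[OF assms(2)] by blast
  have 23: "?P2 \<Longrightarrow> ?P3" using P2_P3[OF assms(3)] by blast
  have 31: "?P3 \<Longrightarrow> ?P1"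
  proof (rule ccontr)
    assume p3: ?P3 and np1: "\<not> ?P1"
    then obtain n R D where "(n, R) \<in> \<Gamma>" "dnf_defines n D R" "reduced_dnf D" "\<not> positive_dnf D" by blast
    then have "\<not> ?P3" using notP1[OF assms(3)] by blast
    then show False using p3 by contradiction
  qed
  show ?thesis using 12 23 31 by blast
qed



end
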